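(* Let $\delta\in(0,1)$, let $X\subset\mathbb{R}_+$ be a Borel set with $0\in X$ and $\bar x=\sup X<\infty$, and let $0<x_0\le\bar x$. For $x\in[0,1]$ define $$q^*(x)=\frac{2(1-\delta)}{4-2\delta+x-\sqrt{x(x+8)}},\qquad \rho(x)=\frac12+\frac18\left(x+\sqrt{x(x+8)}\right).$$ Let $\bar q$ be the stationary decision rule with constant stopping probability $q^*(x_0/\bar x)$ (it stops with that probability after every history in which all alternatives $x_1,\dots,x_t$ equal $0$, and stops with probability $1$ after any history containing a nonzero alternative). Then, with $\mathcal B_X=\{F_{(z,\sigma)}:z\in X,\sigma\in[0,1]\}$: (a) $\bar q$ attains the performance ratio $\rho(x_0/\bar x)>1/2$, i.e. $R_{\bar q}(x_0,\mathcal B_X)=\rho(x_0/\bar x)>1/2$; (b) if $x_0/\bar x\le\delta^2/(2-\delta)$, then $\bar q$ is dynamically robust for $(x_0,\mathcal B_X)$.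
   Context: Sequential search model. Fix a discount factor $\delta\in(0,1)$, a Borel set $X\subset\mathbb{R}_+$ with $0\in X$, and an outside option $x_0>0$. Let $\mathcal F_X$ be the set of Borel probability distributions on $X$ with finite mean ("environments"); a set of feasible environments is any $\mathcal F\subset\mathcal F_X$. A history is $h_t=(x_0,x_1,\dots,x_t)$, $t\ge 0$, $x_i\in X$; its best-so-far alternative is $y_t=\max\{x_0,\dots,x_t\}$; $\mathcal H(x_0)$ is the set of all such histories. A decision rule $p$ assigns to each history $h$ a stopping probability $p(h)\in[0,1]$. Given an environment $F$ and a history $h_t$, the future alternatives are i.i.d. with law $F$; at each round $s\ge t$ the individual stops with probability $p(h_s)$ (otherwise she observes the next alternative), and stopping at round $s$ yields $\delta^{s-t}y_s$ (never stopping yields $0$). $U_p(F,h_t)$ is the expected payoff, and $V(F,h)=\sup_pU_p(F,h)$. A prior is a finitely supported probability distribution $\mu$ on $\mathcal F$; $\Delta(\mathcal F)$ is the set of priors, each $F$ identified with the point mass on it. An environment or prior is consistent with $h_t$ if $x_1,\dots,x_t$ occurs with positive probability under it; $\mathcal F(h)$, $\Delta(\mathcal F(h))$ denote the consistent ones. For consistent $\mu$, $U_p(\mu,h)=\sum_F\mu(F\mid h)U_p(F,h)$ with $\mu(\cdot\mid h)$ the Bayesian posterior, and $V(\mu,h)=\sup_pU_p(\mu,h)$. The performance ratio is $R_p(x_0,\mathcal F)=\inf_{h\in\mathcal H(x_0)}\inf_{\mu\in\Delta(\mathcal F(h))}U_p(\mu,h)/V(\mu,h)$, $R^*(x_0,\mathcal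 F)=\sup_pR_p(x_0,\mathcal F)$ over all decision rules, and $p$ is dynamically robust if $R_p(x_0,\mathcal F)=R^*(x_0,\mathcal F)$. A binary environment $F_{(z,\sigma)}$ is the lottery giving $0$ with probability $1-\sigma$ and $z$ with probability $\sigma$. *)

theory Defs
  imports "HOL-Probability.Probability"
begin

text \<open>A history h_t = (x0, x1, ..., xt) is the list
  x0 # [x1, ..., xt]. Environments are represented as discrete distributions
  (real pmf); all binary environments are of this form.\<close>

fun iexp :: "real pmf \<Rightarrow> nat \<Rightarrow> (real list \<Rightarrow> real) \<Rightarrow> real" where
  "iexp F 0 g = g []"
| "iexp F (Suc k) g = measure_pmf.expectation F (\<lambda>x. iexp F k (\<lambda>xs. g (x # xs)))"

definition best :: "real list \<Rightarrow> real" where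
  "best h = Max (set h)"

definition decision_rules :: "(real list \<Rightarrow> real) set" where
  "decision_rules = {p. \<forall>h. 0 \<le> p h \<and> p h \<le> 1}"

text \<open>U_p(F,h): stop at round t+k (after k further draws xs) with probability
  (prod_{j<k} (1 - p(h @ take j xs))) * p(h @ xs), obtaining delta^k * y.\<close>
definition payoff :: "real \<Rightarrow> (real list \<Rightarrow> real) \<Rightarrow> real pmf \<Rightarrow> real list \<Rightarrow> real" where
  "payoff \<delta> p F h = (\<Sum>k. \<delta> ^ k * iexp F k
      (\<lambda>xs. (\<Prod>j<k. 1 - p (h @ take j xs)) * p (h @ xs) * best (h @ xs)))"

definition likelihood :: "real pmf \<Rightarrow> real list \<Rightarrow> real" where
  "likelihood F h = prod_list (map (pmf F) (tl h))"

definition consistent :: "real pmf \<Rightarrow> real list \<Rightarrow> bool" where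
  "consistent F h \<longleftrightarrow> likelihood F h > 0"

definition posterior :: "real pmf pmf \<Rightarrow> real list \<Rightarrow> real pmf \<Rightarrow> real" where
  "posterior \<mu> h F = pmf \<mu> F * likelihood F h / (\<Sum>G\<in>set_pmf \<mu>. pmf \<mu> G * likelihood G h)"

definition payoff_prior :: "real \<Rightarrow> (real list \<Rightarrow> real) \<Rightarrow> real pmf pmf \<Rightarrow> real list \<Rightarrow> real" where
  "payoff_prior \<delta> p \<mu> h = (\<Sum>F\<in>set_pmf \<mu>. posterior \<mu> h F * payoff \<delta> p F h)"

definition value_prior :: "real \<Rightarrow> real pmf pmf \<Rightarrow> real list \<Rightarrow> real" where
  "value_prior \<delta> \<mu> h = (SUP p\<in>decision_rules. payoff_prior \<delta> p \<mu> h)"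

definition histories :: "real set \<Rightarrow> real \<Rightarrow> real list set" where
  "histories X x0 = {h. \<exists>xs. h = x0 # xs \<and> set xs \<subseteq> X}"

definition environments :: "real set \<Rightarrow> real pmf set" where
  "environments X = {F. set_pmf F \<subseteq> X \<and> integrable (measure_pmf F) (\<lambda>x. x)}"

definition priors :: "real pmf set \<Rightarrow> real pmf pmf set" where
  "priors Fs = {\<mu>. finite (set_pmf \<mu>) \<and> set_pmf \<mu> \<subseteq> Fs}"

definition consistent_priors :: "real pmf set \<Rightarrow> real list \<Rightarrow> real pmf pmf set" where
  "consistent_priors Fs h = priors {F \<in> Fs. consistent F h}"

text \<open>R_p(x0,F): infimum over all histories and all consistent priors
  (pairs (h,mu) with no consistent prior impose no constraint).\<close>
definition perf_ratio :: "real \<Rightarrow> real set \<Rightarrow> real \<Rightarrow> real pmf set \<Rightarrow> (real list \<Rightarrow> real) \<Rightarrow> real" where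
  "perf_ratio \<delta> X x0 Fs p = Inf {payoff_prior \<delta> p \<mu> h / value_prior \<delta> \<mu> h | h \<mu>.
       h \<in> histories X x0 \<and> \<mu> \<in> consistent_priors Fs h}"

definition opt_ratio :: "real \<Rightarrow> real set \<Rightarrow> real \<Rightarrow> real pmf set \<Rightarrow> real" where
  "opt_ratio \<delta> X x0 Fs = (SUP p\<in>decision_rules. perf_ratio \<delta> X x0 Fs p)"

definition dyn_robust :: "real \<Rightarrow> real set \<Rightarrow> real \<Rightarrow> real pmf set \<Rightarrow> (real list \<Rightarrow> real) \<Rightarrow> bool" where
  "dyn_robust \<delta> X x0 Fs p \<longleftrightarrow> p \<in> decision_rules \<and> perf_ratio \<delta> X x0 Fs p = opt_ratio \<delta> X x0 Fs"

definition binary_env :: "real \<Rightarrow> real \<Rightarrow> real pmf" where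
  "binary_env z \<sigma> = map_pmf (\<lambda>b. if b then z else 0) (bernoulli_pmf \<sigma>)"

definition binary_envs :: "real set \<Rightarrow> real pmf set" where
  "binary_envs X = {binary_env z \<sigma> | z \<sigma>. z \<in> X \<and> 0 \<le> \<sigma> \<and> \<sigma> \<le> 1}"

definition q_star :: "real \<Rightarrow> real \<Rightarrow> real" where
  "q_star \<delta> x = 2 * (1 - \<delta>) / (4 - 2 * \<delta> + x - sqrt (x * (x + 8)))"

definition rho :: "real \<Rightarrow> real" where
  "rho x = 1/2 + (x + sqrt (x * (x + 8))) / 8"

definition stationary_rule :: "real \<Rightarrow> real list \<Rightarrow> real" where
  "stationary_rule q h = (if (\<forall>x\<in>set (tl h). x = 0) then q else 1)"

end

theory Submission
  imports Defs
begin

lemma exp_binary: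
  assumes "0 \<le> \<sigma>" "\<sigma> \<le> 1"
  shows "measure_pmf.expectation (binary_env z \<sigma>) f = (1 - \<sigma>) * f 0 + \<sigma> * f z"
  using assms unfolding binary_env_def by simp

lemma iexp_Suc_bin:
  assumes "0 \<le> \<sigma>" "\<sigma> \<le> 1"
  shows "iexp (binary_env z \<sigma>) (Suc k) g = (1 - \<sigma>) * iexp (binary_env z \<sigma>) k (\<lambda>xs. g (0 # xs))
            + \<sigma> * iexp (binary_env z \<sigma>) k (\<lambda>xs. g (z # xs))"
  using assms by (simp add: exp_binary)

lemma iexp_cmult:
  assumes "0 \<le> \<sigma>" "\<sigma> \<le> 1"
  shows "iexp (binary_env z \<sigma>) k (\<lambda>xs. c * g xs) = c * iexp (binary_env z \<sigma>) k g"
  using assms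
proof (induction k arbitrary: g)
  case 0 then show ?case by simp
next
  case (Suc k)
  show ?case using Suc.prems
    by (simp add: iexp_Suc_bin Suc.IH[OF Suc.prems] algebra_simps)
qed

lemma iexp_const:
  assumes "0 \<le> \<sigma>" "\<sigma> \<le> 1"
  shows "iexp (binary_env z \<sigma>) k (\<lambda>xs. c) = c"
  using assms
proof (induction k)
  case 0 then show ?case by simp
next
  case (Suc k)
  show ?case using Suc by (simp add: iexp_Suc_bin algebra_simps)
qed

lemma iexp_mono:
  assumes "0 \<le> \<sigma>" "\<sigma> \<le> 1"
    and "\<And>xs. set xs \<subseteq> {0, z} \<Longrightarrow> g xs \<le> g' xs"
  shows "iexp (binary_env z \<sigma>) k g \<le> iexp (binary_env z \<sigma>) k g'"
  using assms
proof (induction k arbitrary: g g')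
  case 0 then show ?case by simp
next
  case (Suc k)
  have a: "iexp (binary_env z \<sigma>) k (\<lambda>xs. g (0 # xs)) \<le> iexp (binary_env z \<sigma>) k (\<lambda>xs. g' (0 # xs))"
    by (rule Suc.IH) (use Suc.prems in auto)
  have b: "iexp (binary_env z \<sigma>) k (\<lambda>xs. g (z # xs)) \<le> iexp (binary_env z \<sigma>) k (\<lambda>xs. g' (z # xs))"
    by (rule Suc.IH) (use Suc.prems in auto)
  show ?case using Suc.prems a b
    by (simp only: iexp_Suc_bin[OF Suc.prems(1,2)]) (simp add: add_mono mult_left_mono)
qed

definition tf :: "(real list \<Rightarrow> real) \<Rightarrow> real list \<Rightarrow> nat \<Rightarrow> real list \<Rightarrow> real" where
  "tf p h k xs = (\<Prod>j<k. 1 - p (h @ take j xs)) * p (h @ xs) * best (h @ xs)"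

definition pt :: "real \<Rightarrow> (real list \<Rightarrow> real) \<Rightarrow> real pmf \<Rightarrow> real list \<Rightarrow> nat \<Rightarrow> real" where
  "pt \<delta> p F h k = \<delta> ^ k * iexp F k (tf p h k)"

lemma payoff_pt: "payoff \<delta> p F h = (\<Sum>k. pt \<delta> p F h k)"
  unfolding payoff_def pt_def tf_def by simp

lemma tf_Suc: "tf p h (Suc k) (x # xs) = (1 - p h) * tf p (h @ [x]) k xs"
  unfolding tf_def prod.lessThan_Suc_shift by (simp del: prod.lessThan_Suc)

lemma pt_Suc:
  assumes "0 \<le> \<sigma>" "\<sigma> \<le> 1"
  shows "pt \<delta> p (binary_env z \<sigma>) h (Suc k) = (1 - p h) * \<delta> *
     ((1 - \<sigma>) * pt \<delta> p (binary_env z \<sigma>) (h @ [0]) k + \<sigma> * pt \<delta> p (binary_env z \<sigma>) (h @ [z]) k)"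
proof -
  have "iexp (binary_env z \<sigma>) (Suc k) (tf p h (Suc k)) =
     (1 - \<sigma>) * iexp (binary_env z \<sigma>) k (\<lambda>xs. (1 - p h) * tf p (h @ [0]) k xs)
     + \<sigma> * iexp (binary_env z \<sigma>) k (\<lambda>xs. (1 - p h) * tf p (h @ [z]) k xs)"
    by (simp only: iexp_Suc_bin[OF assms] tf_Suc)
  also have "\<dots> = (1 - p h) * ((1 - \<sigma>) * iexp (binary_env z \<sigma>) k (tf p (h @ [0]) k)
     + \<sigma> * iexp (binary_env z \<sigma>) k (tf p (h @ [z]) k))"
    by (simp only: iexp_cmult[OF assms]) (simp add: algebra_simps)
  finally have eq: "iexp (binary_env z \<sigma>) (Suc k) (tf p h (Suc k)) = (1 - p h) * ((1 - \<sigma>) * iexp (binary_env z \<sigma>) k (tf p (h @ [0]) k)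
     + \<sigma> * iexp (binary_env z \<sigma>) k (tf p (h @ [z]) k))" .
  show ?thesis unfolding pt_def by (simp only: eq power_Suc) (simp add: algebra_simps)
qed

lemma pt_0: "pt \<delta> p F h 0 = p h * best h"
  unfolding pt_def tf_def by simp

definition vh :: "real list \<Rightarrow> bool" where
  "vh h \<longleftrightarrow> h \<noteq> [] \<and> (\<forall>y\<in>set h. 0 \<le> y)"

lemma best_snoc: "h \<noteq> [] \<Longrightarrow> best (h @ [y]) = max (best h) y"
  unfolding best_def by (simp add: Max_insert max.commute)

lemma best_ge: "y \<in> set h \<Longrightarrow> y \<le> best h"
  unfolding best_def by simp

lemma best_in: "h \<noteq> [] \<Longrightarrow> best h \<in> set h"
  unfolding best_def by simp

lemma best_nonneg: "vh h \<Longrightarrow> 0 \<le> best h"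
  unfolding vh_def using best_in by blast

lemma best_append_le: "h \<noteq> [] \<Longrightarrow> best h \<le> M \<Longrightarrow> (\<forall>x\<in>set xs. x \<le> M) \<Longrightarrow> best (h @ xs) \<le> M"
  unfolding best_def by auto

lemma vh_snoc: "vh h \<Longrightarrow> 0 \<le> y \<Longrightarrow> vh (h @ [y])"
  unfolding vh_def by auto

lemma vh_append: "vh h \<Longrightarrow> set xs \<subseteq> {0, z} \<Longrightarrow> 0 \<le> z \<Longrightarrow> vh (h @ xs)"
  unfolding vh_def by auto

lemma tf_bounds:
  assumes p: "p \<in> decision_rules" and h: "vh h" and z: "0 \<le> z" and xs: "set xs \<subseteq> {0, z}"
  shows "0 \<le> tf p h k xs \<and> tf p h k xs \<le> max (best h) z"
proof -
  have p01: "\<And>g. 0 \<le> p g \<and> p g \<le> 1" using p unfolding decision_rules_def by auto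
  have P0: "0 \<le> (\<Prod>j<k. 1 - p (h @ take j xs))" by (rule prod_nonneg) (use p01 in auto)
  have P1: "(\<Prod>j<k. 1 - p (h @ take j xs)) \<le> 1" by (rule prod_le_1) (use p01 in auto)
  have B0: "0 \<le> best (h @ xs)" using best_nonneg[OF vh_append[OF h xs z]] .
  have hne: "h \<noteq> []" using h unfolding vh_def by auto
  have B1: "best (h @ xs) \<le> max (best h) z"
    by (rule best_append_le[OF hne]) (use xs best_nonneg[OF h] in auto)
  have "tf p h k xs \<le> 1 * 1 * best (h @ xs)" unfolding tf_def
    by (intro mult_mono P1 p01[THEN conjunct2] B0 mult_nonneg_nonneg P0 p01[THEN conjunct1]) auto
  with B1 have "tf p h k xs \<le> max (best h) z" by simp
  moreover have "0 \<le> tf p h k xs" unfolding tf_def using P0 p01 B0 by simp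
  ultimately show ?thesis by simp
qed

lemma pt_bounds:
  assumes p: "p \<in> decision_rules" and h: "vh h" and z: "0 \<le> z"
    and s: "0 \<le> \<sigma>" "\<sigma> \<le> 1" and d: "0 \<le> \<delta>"
  shows "0 \<le> pt \<delta> p (binary_env z \<sigma>) h k \<and> pt \<delta> p (binary_env z \<sigma>) h k \<le> \<delta> ^ k * max (best h) z"
proof -
  have "iexp (binary_env z \<sigma>) k (\<lambda>xs. 0) \<le> iexp (binary_env z \<sigma>) k (tf p h k)"
    by (rule iexp_mono[OF s]) (use tf_bounds[OF p h z] in auto)
  then have a: "0 \<le> iexp (binary_env z \<sigma>) k (tf p h k)" using iexp_const[OF s] by simp
  have "iexp (binary_env z \<sigma>) k (tf p h k) \<le> iexp (binary_env z \<sigma>) k (\<lambda>xs. max (best h) z)"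
    by (rule iexp_mono[OF s]) (use tf_bounds[OF p h z] in auto)
  then have b: "iexp (binary_env z \<sigma>) k (tf p h k) \<le> max (best h) z" using iexp_const[OF s] by simp
  show ?thesis unfolding pt_def using a b d by (simp add: mult_left_mono)
qed

lemma pt_summable:
  assumes p: "p \<in> decision_rules" and h: "vh h" and z: "0 \<le> z"
    and s: "0 \<le> \<sigma>" "\<sigma> \<le> 1" and d: "0 \<le> \<delta>" "\<delta> < 1"
  shows "summable (pt \<delta> p (binary_env z \<sigma>) h)"
proof (rule summable_comparison_test)
  show "\<exists>N. \<forall>n\<ge>N. norm (pt \<delta> p (binary_env z \<sigma>) h n) \<le> max (best h) z * \<delta> ^ n"
    using pt_bounds[OF p h z s d(1)] by (auto simp: mult.commute)
  show "summable (\<lambda>n. max (best h) z * \<delta> ^ n)"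
    by (rule summable_mult) (use d in simp)
qed

lemma bellman:
  assumes p: "p \<in> decision_rules" and h: "vh h" and z: "0 \<le> z"
    and s: "0 \<le> \<sigma>" "\<sigma> \<le> 1" and d: "0 \<le> \<delta>" "\<delta> < 1"
  shows "payoff \<delta> p (binary_env z \<sigma>) h = p h * best h + (1 - p h) * \<delta> *
     ((1 - \<sigma>) * payoff \<delta> p (binary_env z \<sigma>) (h @ [0]) + \<sigma> * payoff \<delta> p (binary_env z \<sigma>) (h @ [z]))"
proof -
  let ?F = "binary_env z \<sigma>"
  have h0: "vh (h @ [0])" by (rule vh_snoc[OF h]) simp
  have hz: "vh (h @ [z])" by (rule vh_snoc[OF h z])
  have S0: "pt \<delta> p ?F (h @ [0]) sums payoff \<delta> p ?F (h @ [0])"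
    unfolding payoff_pt by (rule summable_sums[OF pt_summable[OF p h0 z s d]])
  have Sz: "pt \<delta> p ?F (h @ [z]) sums payoff \<delta> p ?F (h @ [z])"
    unfolding payoff_pt by (rule summable_sums[OF pt_summable[OF p hz z s d]])
  have "(\<lambda>k. (1 - p h) * \<delta> * ((1 - \<sigma>) * pt \<delta> p ?F (h @ [0]) k + \<sigma> * pt \<delta> p ?F (h @ [z]) k)) sums
        ((1 - p h) * \<delta> * ((1 - \<sigma>) * payoff \<delta> p ?F (h @ [0]) + \<sigma> * payoff \<delta> p ?F (h @ [z])))"
    by (intro sums_mult sums_add S0 Sz)
  then have "(\<lambda>k. pt \<delta> p ?F h (Suc k)) sums
        ((1 - p h) * \<delta> * ((1 - \<sigma>) * payoff \<delta> p ?F (h @ [0]) + \<sigma> * payoff \<delta> p ?F (h @ [z])))"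
    by (simp only: pt_Suc[OF s])
  then have "pt \<delta> p ?F h sums
        ((1 - p h) * \<delta> * ((1 - \<sigma>) * payoff \<delta> p ?F (h @ [0]) + \<sigma> * payoff \<delta> p ?F (h @ [z])) + pt \<delta> p ?F h 0)"
    by (simp only: sums_Suc_iff)
  then show ?thesis unfolding payoff_pt[of \<delta> p ?F h] pt_0 by (simp add: sums_unique[symmetric] algebra_simps)
qed



lemma super_ineq:
  fixes b z \<sigma> \<delta> W Sa Sb ph :: real
  assumes b: "0 \<le> b" and z: "0 \<le> z" and s: "0 \<le> \<sigma>" "\<sigma> \<le> 1" and d: "0 \<le> \<delta>" "\<delta> < 1"
    and W: "W * (1 - \<delta> + \<delta> * \<sigma>) = \<delta> * \<sigma> * z" "W \<le> z"
    and ph: "0 \<le> ph" "ph \<le> 1"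
    and Sa: "Sa \<le> max b W" and Sb: "Sb \<le> max (max b z) W"
  shows "ph * b + (1 - ph) * \<delta> * ((1 - \<sigma>) * Sa + \<sigma> * Sb) \<le> max b W"
proof -
  let ?M = "max b W"
  have key: "\<delta> * ((1 - \<sigma>) * Sa + \<sigma> * Sb) \<le> ?M"
  proof -
    have "(1 - \<sigma>) * Sa + \<sigma> * Sb \<le> (1 - \<sigma>) * ?M + \<sigma> * max (max b z) W"
      using Sa Sb s by (intro add_mono mult_left_mono) auto
    then have 1: "\<delta> * ((1 - \<sigma>) * Sa + \<sigma> * Sb) \<le> \<delta> * ((1 - \<sigma>) * ?M + \<sigma> * max (max b z) W)"
      using d(1) by (rule mult_left_mono)
    show ?thesis
    proof (cases "z \<le> b")
      case True
      then have "max (max b z) W = ?M" by simp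
      then have "\<delta> * ((1 - \<sigma>) * ?M + \<sigma> * max (max b z) W) = \<delta> * ?M" by (simp add: algebra_simps)
      also have "\<dots> \<le> ?M" using d b by (simp add: mult_left_le_one_le)
      finally show ?thesis using 1 by simp
    next
      case False
      then have "max (max b z) W = z" using W(2) by simp
      then have "\<delta> * ((1 - \<sigma>) * ?M + \<sigma> * max (max b z) W) = \<delta> * (1 - \<sigma>) * ?M + W * (1 - \<delta> + \<delta> * \<sigma>)"
        using W(1) by (simp add: algebra_simps)
      also have "\<dots> \<le> \<delta> * (1 - \<sigma>) * ?M + ?M * (1 - \<delta> + \<delta> * \<sigma>)"
        using d s by (intro add_left_mono mult_right_mono) (auto simp: mult_left_le_one_le)
      also have "\<dots> = ?M" by (simp add: algebra_simps)
      finally show ?thesis using 1 by simp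
    qed
  qed
  have k2: "(1 - ph) * (\<delta> * ((1 - \<sigma>) * Sa + \<sigma> * Sb)) \<le> (1 - ph) * ?M"
    by (rule mult_left_mono[OF key]) (use ph in simp)
  have "ph * b + (1 - ph) * \<delta> * ((1 - \<sigma>) * Sa + \<sigma> * Sb) \<le> ph * ?M + (1 - ph) * ?M"
    using k2 ph by (intro add_mono mult_left_mono) (auto simp: mult.assoc)
  then show ?thesis by (simp add: algebra_simps)
qed

lemma payoff_ub:
  assumes p: "p \<in> decision_rules" and h: "vh h" and z: "0 \<le> z"
    and s: "0 \<le> \<sigma>" "\<sigma> \<le> 1" and d: "0 \<le> \<delta>" "\<delta> < 1"
  shows "payoff \<delta> p (binary_env z \<sigma>) h \<le> max (best h) (\<delta> * \<sigma> * z / (1 - \<delta> + \<delta> * \<sigma>))"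
proof -
  let ?F = "binary_env z \<sigma>"
  define W where "W = \<delta> * \<sigma> * z / (1 - \<delta> + \<delta> * \<sigma>)"
  have pos: "0 < 1 - \<delta> + \<delta> * \<sigma>" using d s by (simp add: add_pos_nonneg)
  have W1: "W * (1 - \<delta> + \<delta> * \<sigma>) = \<delta> * \<sigma> * z" unfolding W_def using pos by simp
  have W2: "W \<le> z"
  proof -
    have "\<delta> * \<sigma> * z \<le> (1 - \<delta> + \<delta> * \<sigma>) * z" using d z by (intro mult_right_mono) auto
    then show ?thesis unfolding W_def using pos by (simp add: divide_le_eq mult.commute)
  qed
  have p01: "\<And>g. 0 \<le> p g \<and> p g \<le> 1" using p unfolding decision_rules_def by auto
  have part: "\<forall>h. vh h \<longrightarrow> (\<Sum>k<n. pt \<delta> p ?F h k) \<le> max (best h) W" for n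
  proof (induction n)
    case 0
    show ?case using best_nonneg by (auto simp: le_max_iff_disj)
  next
    case (Suc n)
    show ?case
    proof (intro allI impI)
      fix h assume h: "vh h"
      have hne: "h \<noteq> []" using h unfolding vh_def by auto
      have h0: "vh (h @ [0])" by (rule vh_snoc[OF h]) simp
      have hz: "vh (h @ [z])" by (rule vh_snoc[OF h z])
      have "(\<Sum>k<Suc n. pt \<delta> p ?F h k) = pt \<delta> p ?F h 0 + (\<Sum>k<n. pt \<delta> p ?F h (Suc k))"
        by (rule sum.lessThan_Suc_shift)
      also have "\<dots> = p h * best h + (1 - p h) * \<delta> * ((1 - \<sigma>) * (\<Sum>k<n. pt \<delta> p ?F (h @ [0]) k)
            + \<sigma> * (\<Sum>k<n. pt \<delta> p ?F (h @ [z]) k))"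
        by (simp only: pt_0 pt_Suc[OF s] sum_distrib_left sum.distrib[symmetric])
      also have "\<dots> \<le> max (best h) W"
        apply (rule super_ineq[OF best_nonneg[OF h] z s d W1 W2 p01[THEN conjunct1] p01[THEN conjunct2]])
        using Suc.IH[rule_format, OF h0] Suc.IH[rule_format, OF hz] best_snoc[OF hne, of 0] best_snoc[OF hne, of z]
          best_nonneg[OF h] by (simp_all add: max.absorb1)
      finally show "(\<Sum>k<Suc n. pt \<delta> p ?F h k) \<le> max (best h) W" .
    qed
  qed
  show ?thesis unfolding payoff_pt W_def[symmetric]
    by (rule suminf_le_const[OF pt_summable[OF p h z s d]]) (use part h in blast)
qed

lemma payoff_nonneg:
  assumes p: "p \<in> decision_rules" and h: "vh h" and z: "0 \<le> z"
    and s: "0 \<le> \<sigma>" "\<sigma> \<le> 1" and d: "0 \<le> \<delta>" "\<delta> < 1"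
  shows "0 \<le> payoff \<delta> p (binary_env z \<sigma>) h"
  unfolding payoff_pt
  by (rule suminf_nonneg[OF pt_summable[OF p h z s d]]) (use pt_bounds[OF p h z s d(1)] in blast)

lemma payoff_stop:
  assumes p: "p \<in> decision_rules" and h: "vh h" and z: "0 \<le> z"
    and s: "0 \<le> \<sigma>" "\<sigma> \<le> 1" and d: "0 \<le> \<delta>" "\<delta> < 1" and ph: "p h = 1"
  shows "payoff \<delta> p (binary_env z \<sigma>) h = best h"
  using bellman[OF p h z s d] ph by simp

lemma payoff_cong:
  assumes "\<And>xs. p (h @ xs) = p' (h' @ xs)" "\<And>xs. best (h @ xs) = best (h' @ xs)"
  shows "payoff \<delta> p F h = payoff \<delta> p' F h'"
proof -
  have "\<And>k xs. tf p h k xs = tf p' h' k xs" unfolding tf_def using assms by simp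
  then show ?thesis unfolding payoff_pt pt_def by presburger
qed



lemma stat_rule_in: "0 \<le> q \<Longrightarrow> q \<le> 1 \<Longrightarrow> stationary_rule q \<in> decision_rules"
  unfolding decision_rules_def stationary_rule_def by auto

lemma best_zeros:
  assumes "set zs \<subseteq> {0}" "0 \<le> x0"
  shows "best (x0 # zs @ xs) = best (x0 # xs)"
proof (rule antisym)
  show "best (x0 # zs @ xs) \<le> best (x0 # xs)"
    unfolding best_def
  proof (rule Max.boundedI)
    fix a assume a: "a \<in> set (x0 # zs @ xs)"
    have m: "x0 \<le> Max (set (x0 # xs))" by simp
    show "a \<le> Max (set (x0 # xs))"
    proof (cases "a \<in> set (x0 # xs)")
      case True then show ?thesis by simp
    next
      case False then have "a = 0" using a assms(1) by auto
      then show ?thesis using m assms(2) by linarith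
    qed
  qed auto
  show "best (x0 # xs) \<le> best (x0 # zs @ xs)"
    unfolding best_def by (auto intro!: Max.boundedI Max_ge)
qed

lemma stat_zero:
  assumes "set zs \<subseteq> {0}" "0 \<le> x0"
  shows "payoff \<delta> (stationary_rule q) F (x0 # zs) = payoff \<delta> (stationary_rule q) F [x0]"
proof (rule payoff_cong)
  fix xs
  show "stationary_rule q ((x0 # zs) @ xs) = stationary_rule q ([x0] @ xs)"
    unfolding stationary_rule_def using assms(1) by auto
  show "best ((x0 # zs) @ xs) = best ([x0] @ xs)" using best_zeros[OF assms] by simp
qed

lemma stat_U0:
  assumes q: "0 \<le> q" "q \<le> 1" and x0: "0 < x0" and z: "0 < z"
    and s: "0 \<le> \<sigma>" "\<sigma> \<le> 1" and d: "0 \<le> \<delta>" "\<delta> < 1"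
  shows "payoff \<delta> (stationary_rule q) (binary_env z \<sigma>) [x0] * (1 - (1 - q) * \<delta> * (1 - \<sigma>))
     = q * x0 + (1 - q) * \<delta> * \<sigma> * max x0 z"
proof -
  let ?F = "binary_env z \<sigma>" and ?p = "stationary_rule q"
  have p: "?p \<in> decision_rules" by (rule stat_rule_in[OF q])
  have h: "vh [x0]" unfolding vh_def using x0 by simp
  have e0: "payoff \<delta> ?p ?F ([x0] @ [0]) = payoff \<delta> ?p ?F [x0]"
    using stat_zero[of "[0]" x0 \<delta> q ?F] x0 by simp
  have ez: "payoff \<delta> ?p ?F ([x0] @ [z]) = max x0 z"
  proof -
    have "vh ([x0] @ [z])" unfolding vh_def using x0 z by simp
    moreover have "?p ([x0] @ [z]) = 1" unfolding stationary_rule_def using z by simp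
    ultimately have "payoff \<delta> ?p ?F ([x0] @ [z]) = best ([x0] @ [z])"
      using payoff_stop[OF p _ _ s d] z by simp
    then show ?thesis using best_snoc[of "[x0]" z] by (simp add: best_def)
  qed
  have "payoff \<delta> ?p ?F [x0] = ?p [x0] * best [x0] + (1 - ?p [x0]) * \<delta> *
     ((1 - \<sigma>) * payoff \<delta> ?p ?F ([x0] @ [0]) + \<sigma> * payoff \<delta> ?p ?F ([x0] @ [z]))"
    by (rule bellman[OF p h _ s d]) (use z in simp)
  also have "\<dots> = q * x0 + (1 - q) * \<delta> * ((1 - \<sigma>) * payoff \<delta> ?p ?F [x0] + \<sigma> * max x0 z)"
    unfolding e0 ez by (simp add: stationary_rule_def best_def)
  finally show ?thesis by (simp add: algebra_simps)
qed

lemma stat_U0_zero: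
  assumes q: "0 \<le> q" "q \<le> 1" and x0: "0 < x0"
    and s: "0 \<le> \<sigma>" "\<sigma> \<le> 1" and d: "0 \<le> \<delta>" "\<delta> < 1"
  shows "payoff \<delta> (stationary_rule q) (binary_env 0 \<sigma>) [x0] * (1 - (1 - q) * \<delta>) = q * x0"
proof -
  let ?F = "binary_env 0 \<sigma>" and ?p = "stationary_rule q"
  have p: "?p \<in> decision_rules" by (rule stat_rule_in[OF q])
  have h: "vh [x0]" unfolding vh_def using x0 by simp
  have e0: "payoff \<delta> ?p ?F ([x0] @ [0]) = payoff \<delta> ?p ?F [x0]"
    using stat_zero[of "[0]" x0 \<delta> q ?F] x0 by simp
  have "payoff \<delta> ?p ?F [x0] = ?p [x0] * best [x0] + (1 - ?p [x0]) * \<delta> *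
     ((1 - \<sigma>) * payoff \<delta> ?p ?F ([x0] @ [0]) + \<sigma> * payoff \<delta> ?p ?F ([x0] @ [0]))"
    using bellman[OF p h _ s d, of 0] by simp
  also have "\<dots> = q * x0 + (1 - q) * \<delta> * payoff \<delta> ?p ?F [x0]"
    unfolding e0 by (simp add: stationary_rule_def best_def algebra_simps)
  finally show ?thesis by (simp add: algebra_simps)
qed



context
  fixes x \<delta> :: real
  assumes x: "0 < x" "x \<le> 1" and d: "0 < \<delta>" "\<delta> < 1"
begin

lemma s_sq: "(sqrt (x * (x + 8)))^2 = x * (x + 8)"
  using x by simp

lemma s_nonneg: "0 \<le> sqrt (x * (x + 8))"
  using x by simp

lemma s_le: "sqrt (x * (x + 8)) \<le> 4 - x"
proof -
  have "x * (x + 8) \<le> (4 - x)^2" using x by (simp add: power2_eq_square algebra_simps)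
  then have "sqrt (x * (x + 8)) \<le> sqrt ((4 - x)^2)" by (rule real_sqrt_le_mono)
  then show ?thesis using x by simp
qed

lemma s_le2: "sqrt (x * (x + 8)) \<le> x + 2"
proof -
  have "x * (x + 8) \<le> (x + 2)^2" using x by (simp add: power2_eq_square algebra_simps)
  then have "sqrt (x * (x + 8)) \<le> sqrt ((x + 2)^2)" by (rule real_sqrt_le_mono)
  then show ?thesis using x by simp
qed

lemma rho_le1: "rho x \<le> 1"
proof -
  define s where "s = sqrt (x * (x + 8))"
  have "s \<le> 4 - x" using s_le unfolding s_def .
  then show ?thesis unfolding rho_def s_def[symmetric] by (simp add: field_simps)
qed

lemma rho_gt: "1/2 < rho x"
proof -
  define s where "s = sqrt (x * (x + 8))"
  have "0 \<le> s" using s_nonneg unfolding s_def .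
  then show ?thesis unfolding rho_def s_def[symmetric] using x(1) by (simp add: field_simps)
qed

lemma qden_pos: "0 < 4 - 2 * \<delta> + x - sqrt (x * (x + 8))"
  using s_le2 d by simp

lemma q_bounds: "0 < q_star \<delta> x \<and> q_star \<delta> x \<le> 1"
proof -
  have "2 * (1 - \<delta>) \<le> 4 - 2 * \<delta> + x - sqrt (x * (x + 8))" using s_le2 by simp
  then show ?thesis unfolding q_star_def using qden_pos d by (simp add: divide_le_eq)
qed

lemma rd_pos: "0 < 1 - rho x * \<delta>"
proof -
  have "rho x * \<delta> < 1 * 1" using rho_le1 d rho_gt by (intro mult_le_less_imp_less) auto
  then show ?thesis by simp
qed

lemma q_rho: "q_star \<delta> x * (1 - rho x * \<delta>) = rho x * (1 - \<delta>)"
proof -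
  define s where "s = sqrt (x * (x + 8))"
  have s2: "s * s = x * x + 8 * x" using s_sq unfolding s_def by (simp add: power2_eq_square algebra_simps)
  have den: "0 < 4 - 2 * \<delta> + x - s" using qden_pos unfolding s_def .
  have e1: "(4 + x + s) * (4 - 2 * \<delta> + x - s) - 2 * (8 - \<delta> * (4 + x + s)) = (x * x + 8 * x) - s * s"
    by (simp add: algebra_simps)
  have key: "(4 + x + s) * (4 - 2 * \<delta> + x - s) = 2 * (8 - \<delta> * (4 + x + s))"
    using e1 s2 by simp
  have ra: "rho x = (4 + x + s) / 8" unfolding rho_def s_def by simp
  have k2: "2 * (1 - rho x * \<delta>) = rho x * (4 - 2 * \<delta> + x - s)"
    unfolding ra using key by (simp add: field_simps)
  have "q_star \<delta> x * (1 - rho x * \<delta>) = (1 - \<delta>) * (2 * (1 - rho x * \<delta>)) / (4 - 2 * \<delta> + x - s)"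
    unfolding q_star_def s_def[symmetric] by (simp add: algebra_simps)
  also have "\<dots> = rho x * (1 - \<delta>)" unfolding k2 using den by (simp add: field_simps)
  finally show ?thesis .
qed

lemma G_square:
  "(rho x * (1 - \<delta>) * x + (1 - rho x) * \<delta> * \<sigma>) * (1 - \<delta> + \<delta> * \<sigma>)
     - rho x * \<delta> * \<sigma> * (1 - \<delta> + (1 - rho x) * \<delta> * \<sigma>)
   = ((1 - rho x) * \<delta> * \<sigma> - (1 - \<delta>) * ((x + sqrt (x * (x + 8))) / 4))^2"
proof -
  define s where "s = sqrt (x * (x + 8))"
  have s2: "s * s = x * x + 8 * x" using s_sq unfolding s_def by (simp add: power2_eq_square algebra_simps)
  have e1: "((1/2 + (x + s) / 8) * (1 - \<delta>) * x + (1 - (1/2 + (x + s) / 8)) * \<delta> * \<sigma>) * (1 - \<delta> + \<delta> * \<sigma>)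
     - (1/2 + (x + s) / 8) * \<delta> * \<sigma> * (1 - \<delta> + (1 - (1/2 + (x + s) / 8)) * \<delta> * \<sigma>)
   - ((1 - (1/2 + (x + s) / 8)) * \<delta> * \<sigma> - (1 - \<delta>) * ((x + s) / 4))^2
   = (1 - \<delta>) * (1 - \<delta> + \<delta> * \<sigma>) * ((x * x + 8 * x) - s * s) / 16"
    by (simp add: algebra_simps power2_eq_square divide_simps)
  have e2: "((1/2 + (x + s) / 8) * (1 - \<delta>) * x + (1 - (1/2 + (x + s) / 8)) * \<delta> * \<sigma>) * (1 - \<delta> + \<delta> * \<sigma>)
     - (1/2 + (x + s) / 8) * \<delta> * \<sigma> * (1 - \<delta> + (1 - (1/2 + (x + s) / 8)) * \<delta> * \<sigma>)
   - ((1 - (1/2 + (x + s) / 8)) * \<delta> * \<sigma> - (1 - \<delta>) * ((x + s) / 4))^2 = 0"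
    unfolding e1 s2 by simp
  show ?thesis unfolding rho_def s_def[symmetric] by (rule eq_iff_diff_eq_0[THEN iffD2, OF e2])
qed

end



lemma U_ge:
  fixes x \<delta> \<sigma> z x0 U :: real
  assumes x: "0 < x" "x \<le> 1" and d: "0 < \<delta>" "\<delta> < 1"
    and s: "0 \<le> \<sigma>" "\<sigma> \<le> 1" and z: "0 < z" and x0: "0 < x0" "x * z \<le> x0"
    and U: "U * (1 - (1 - q_star \<delta> x) * \<delta> * (1 - \<sigma>)) = q_star \<delta> x * x0 + (1 - q_star \<delta> x) * \<delta> * \<sigma> * max x0 z"
  shows "rho x * max x0 (\<delta> * \<sigma> * z / (1 - \<delta> + \<delta> * \<sigma>)) \<le> U"
proof -
  define q where "q = q_star \<delta> x"
  define \<rho> where "\<rho> = rho x"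
  have q01: "0 < q" "q \<le> 1" using q_bounds[OF x d] unfolding q_def by auto
  have r1: "\<rho> \<le> 1" "1/2 < \<rho>" using rho_le1[OF x d] rho_gt[OF x d] unfolding \<rho>_def by auto
  have qr: "q * (1 - \<rho> * \<delta>) = \<rho> * (1 - \<delta>)" using q_rho[OF x d] unfolding q_def \<rho>_def .
  have rdp: "0 < 1 - \<rho> * \<delta>" using rd_pos[OF x d] unfolding \<rho>_def .
  have qr2: "q = \<rho> * (1 - (1 - q) * \<delta>)" using qr by (simp add: algebra_simps)
  define den where "den = 1 - (1 - q) * \<delta> * (1 - \<sigma>)"
  have "(1 - q) * \<delta> * (1 - \<sigma>) \<le> 1 * 1 * 1" using q01 d s by (intro mult_mono) auto
  moreover have "(1 - q) * \<delta> * (1 - \<sigma>) \<noteq> 1"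
  proof
    assume "(1 - q) * \<delta> * (1 - \<sigma>) = 1"
    moreover have "(1 - q) * \<delta> * (1 - \<sigma>) \<le> 1 * \<delta> * 1" using q01 d s by (intro mult_mono) auto
    ultimately show False using d by simp
  qed
  ultimately have denp: "0 < den" unfolding den_def by simp
  have U': "U * den = q * x0 + (1 - q) * \<delta> * \<sigma> * max x0 z" using U unfolding den_def q_def .
  have A: "\<rho> * x0 \<le> U"
  proof -
    have "\<rho> * x0 * den = q * x0 + \<rho> * ((1 - q) * \<delta> * \<sigma> * x0)"
      unfolding den_def by (subst (2) qr2) (simp add: algebra_simps)
    also have "\<dots> \<le> q * x0 + 1 * ((1 - q) * \<delta> * \<sigma> * max x0 z)"
      using r1 q01 d s x0 by (intro add_left_mono mult_mono mult_nonneg_nonneg) auto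
    also have "\<dots> = U * den" using U' by simp
    finally show ?thesis using denp by simp
  qed
  define W where "W = \<delta> * \<sigma> * z / (1 - \<delta> + \<delta> * \<sigma>)"
  have pos: "0 < 1 - \<delta> + \<delta> * \<sigma>" using d s by (simp add: add_pos_nonneg)
  have Wz: "W \<le> z"
  proof -
    have "\<delta> * \<sigma> * z \<le> (1 - \<delta> + \<delta> * \<sigma>) * z" using d z by (intro mult_right_mono) auto
    then show ?thesis unfolding W_def using pos by (simp add: divide_le_eq mult.commute)
  qed
  have B: "\<rho> * W \<le> U"
  proof (cases "z \<le> x0")
    case True
    then have "\<rho> * W \<le> \<rho> * x0" using Wz r1 by (intro mult_left_mono) auto
    then show ?thesis using A by simp
  next
    case False
    then have M: "max x0 z = z" by simp
    define \<epsilon> where "\<epsilon> = 1 - \<rho>"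
    have G: "0 \<le> (\<rho> * (1 - \<delta>) * x + \<epsilon> * \<delta> * \<sigma>) * (1 - \<delta> + \<delta> * \<sigma>) - \<rho> * \<delta> * \<sigma> * (1 - \<delta> + \<epsilon> * \<delta> * \<sigma>)"
      using G_square[OF x d, of \<sigma>] unfolding \<rho>_def \<epsilon>_def by simp
    have e1: "(1 - q) * (1 - \<rho> * \<delta>) = \<epsilon>" unfolding \<epsilon>_def using qr by (simp add: algebra_simps)
    have e2: "den * (1 - \<rho> * \<delta>) = 1 - \<delta> + \<epsilon> * \<delta> * \<sigma>"
    proof -
      have "den * (1 - \<rho> * \<delta>) = (1 - \<rho> * \<delta>) - ((1 - q) * (1 - \<rho> * \<delta>)) * \<delta> * (1 - \<sigma>)"
        unfolding den_def by (simp add: algebra_simps)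
      also have "\<dots> = 1 - \<delta> + \<epsilon> * \<delta> * \<sigma>" unfolding e1 unfolding \<epsilon>_def by (simp add: algebra_simps)
      finally show ?thesis .
    qed
    have "\<rho> * \<delta> * \<sigma> * z * (den * (1 - \<rho> * \<delta>)) = z * (\<rho> * \<delta> * \<sigma> * (1 - \<delta> + \<epsilon> * \<delta> * \<sigma>))"
      unfolding e2 by (simp add: algebra_simps)
    also have "\<dots> \<le> z * ((\<rho> * (1 - \<delta>) * x + \<epsilon> * \<delta> * \<sigma>) * (1 - \<delta> + \<delta> * \<sigma>))"
      using G z by (intro mult_left_mono) auto
    also have "\<dots> = (\<rho> * (1 - \<delta>) * (x * z) + \<epsilon> * \<delta> * \<sigma> * z) * (1 - \<delta> + \<delta> * \<sigma>)"
      by (simp add: algebra_simps)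
    also have "\<dots> \<le> (\<rho> * (1 - \<delta>) * x0 + \<epsilon> * \<delta> * \<sigma> * z) * (1 - \<delta> + \<delta> * \<sigma>)"
      using x0 r1 d pos by (intro mult_right_mono add_right_mono mult_left_mono) auto
    also have "\<dots> = ((q * (1 - \<rho> * \<delta>)) * x0 + ((1 - q) * (1 - \<rho> * \<delta>)) * \<delta> * \<sigma> * z) * (1 - \<delta> + \<delta> * \<sigma>)"
      unfolding qr e1 by simp
    also have "\<dots> = (U * den) * (1 - \<delta> + \<delta> * \<sigma>) * (1 - \<rho> * \<delta>)"
      unfolding U' M by (simp add: algebra_simps)
    finally have "\<rho> * \<delta> * \<sigma> * z * (den * (1 - \<rho> * \<delta>)) \<le> (U * (1 - \<delta> + \<delta> * \<sigma>)) * (den * (1 - \<rho> * \<delta>))"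
      by (simp add: algebra_simps)
    then have "\<rho> * \<delta> * \<sigma> * z \<le> U * (1 - \<delta> + \<delta> * \<sigma>)"
      using denp rdp by (simp add: mult_le_cancel_right)
    then show ?thesis unfolding W_def using pos by (simp add: field_simps)
  qed
  show ?thesis using A B unfolding W_def[symmetric] \<rho>_def[symmetric] by simp
qed



lemma binary_support: "y \<in> set_pmf (binary_env z \<sigma>) \<Longrightarrow> y = 0 \<or> y = z"
  unfolding binary_env_def by auto

lemma consistent_elem:
  assumes "consistent F h" "y \<in> set (tl h)"
  shows "y \<in> set_pmf F"
proof -
  have "prod_list (map (pmf F) (tl h)) \<noteq> 0" using assms(1) unfolding consistent_def likelihood_def by simp
  then have "0 \<notin> set (map (pmf F) (tl h))" by (simp add: prod_list_zero_iff)
  then have "pmf F y \<noteq> 0" using assms(2) by force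
  then show ?thesis by (simp add: set_pmf_iff)
qed

lemma post_return:
  assumes "consistent F h"
  shows "payoff_prior \<delta> p (return_pmf F) h = payoff \<delta> p F h"
    and "value_prior \<delta> (return_pmf F) h = (SUP p\<in>decision_rules. payoff \<delta> p F h)"
proof -
  have l: "likelihood F h > 0" using assms unfolding consistent_def .
  have "posterior (return_pmf F) h F = 1" unfolding posterior_def using l by simp
  then show "payoff_prior \<delta> p (return_pmf F) h = payoff \<delta> p F h"
    unfolding payoff_prior_def by simp
  then show "value_prior \<delta> (return_pmf F) h = (SUP p\<in>decision_rules. payoff \<delta> p F h)"
    unfolding value_prior_def using \<open>posterior (return_pmf F) h F = 1\<close>
    by (simp add: payoff_prior_def)
qed

lemma one_rule: "(\<lambda>_. 1) \<in> decision_rules"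
  unfolding decision_rules_def by simp

context
  fixes \<delta> :: real and X :: "real set" and x0 :: real
  assumes d: "0 < \<delta>" "\<delta> < 1"
    and Xp: "X \<subseteq> {0..}" and X0: "0 \<in> X" and bdd: "bdd_above X"
    and x0: "0 < x0" "x0 \<le> Sup X"
begin

lemma xb_pos: "0 < Sup X" using x0 by simp

lemma xx: "0 < x0 / Sup X" "x0 / Sup X \<le> 1"
  using x0 xb_pos by auto

lemma z_le: "z \<in> X \<Longrightarrow> z \<le> Sup X" using bdd by (rule cSup_upper[rotated])

lemma z_nonneg: "z \<in> X \<Longrightarrow> 0 \<le> z" using Xp by auto

lemma xz: "z \<in> X \<Longrightarrow> (x0 / Sup X) * z \<le> x0"
proof -
  assume z: "z \<in> X"
  have "x0 * z \<le> x0 * Sup X" using z_le[OF z] x0 by (intro mult_left_mono) auto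
  then show ?thesis using xb_pos by (simp add: field_simps)
qed

lemma hist_vh: "h \<in> histories X x0 \<Longrightarrow> vh h \<and> (\<exists>xs. h = x0 # xs \<and> set xs \<subseteq> X)"
  unfolding histories_def vh_def using Xp x0 by (auto simp: subset_iff)

lemma env_lemma:
  assumes h: "h \<in> histories X x0" and F: "F \<in> binary_envs X" and c: "consistent F h"
  shows "(\<forall>p\<in>decision_rules. 0 \<le> payoff \<delta> p F h) \<and> payoff \<delta> (\<lambda>_. 1) F h = best h \<and>
    (\<exists>B. (\<forall>p\<in>decision_rules. payoff \<delta> p F h \<le> B) \<and>
         rho (x0 / Sup X) * B \<le> payoff \<delta> (stationary_rule (q_star \<delta> (x0 / Sup X))) F h)"
proof -
  obtain z \<sigma> where F': "F = binary_env z \<sigma>" and z: "z \<in> X" and s: "0 \<le> \<sigma>" "\<sigma> \<le> 1"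
    using F unfolding binary_envs_def by auto
  have z0: "0 \<le> z" using z_nonneg[OF z] .
  have vh: "vh h" and hx: "\<exists>xs. h = x0 # xs \<and> set xs \<subseteq> X" using hist_vh[OF h] by auto
  obtain xs where hxs: "h = x0 # xs" and xsX: "set xs \<subseteq> X" using hx by auto
  have dd: "0 \<le> \<delta>" "\<delta> < 1" using d by auto
  define x where "x = x0 / Sup X"
  define q where "q = q_star \<delta> x"
  have xr: "0 < x" "x \<le> 1" using xx unfolding x_def by auto
  have q01: "0 \<le> q" "q \<le> 1" using q_bounds[OF xr d] unfolding q_def by auto
  have qin: "stationary_rule q \<in> decision_rules" by (rule stat_rule_in[OF q01])
  have r1: "rho x \<le> 1" "0 \<le> rho x" using rho_le1[OF xr d] rho_gt[OF xr d] by auto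
  define W where "W = \<delta> * \<sigma> * z / (1 - \<delta> + \<delta> * \<sigma>)"
  have pos: "0 < 1 - \<delta> + \<delta> * \<sigma>" using d s by (simp add: add_pos_nonneg)
  have Wz: "W \<le> z"
  proof -
    have "\<delta> * \<sigma> * z \<le> (1 - \<delta> + \<delta> * \<sigma>) * z" using d z0 by (intro mult_right_mono) auto
    then show ?thesis unfolding W_def using pos by (simp add: divide_le_eq mult.commute)
  qed
  have P1: "\<forall>p\<in>decision_rules. 0 \<le> payoff \<delta> p F h"
    unfolding F' using payoff_nonneg[OF _ vh z0 s dd] by blast
  have P2: "payoff \<delta> (\<lambda>_. 1) F h = best h"
    unfolding F' by (rule payoff_stop[OF one_rule vh z0 s dd]) simp
  have UB: "\<forall>p\<in>decision_rules. payoff \<delta> p F h \<le> max (best h) W"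
    unfolding F' W_def using payoff_ub[OF _ vh z0 s dd] by blast
  have LB: "rho x * max (best h) W \<le> payoff \<delta> (stationary_rule q) F h"
  proof (cases "\<exists>y\<in>set xs. y \<noteq> 0")
    case True
    then obtain y where y: "y \<in> set xs" "y \<noteq> 0" by auto
    have "y \<in> set_pmf F" using consistent_elem[OF c] y hxs by simp
    then have "y = z" using binary_support y(2) unfolding F' by blast
    then have "z \<le> best h" using y hxs best_ge[of z h] by simp
    then have M: "max (best h) W = best h" using Wz by simp
    have "stationary_rule q h = 1" unfolding stationary_rule_def using hxs y by auto
    then have "payoff \<delta> (stationary_rule q) F h = best h"
      unfolding F' by (rule payoff_stop[OF qin vh z0 s dd])
    moreover have "rho x * best h \<le> 1 * best h" using r1 best_nonneg[OF vh] by (intro mult_right_mono) auto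
    ultimately show ?thesis using M by simp
  next
    case False
    then have zs: "set xs \<subseteq> {0}" by auto
    have bh: "best h = x0" using best_zeros[OF zs, of x0 "[]"] x0 hxs by (simp add: best_def)
    have eqU: "payoff \<delta> (stationary_rule q) F h = payoff \<delta> (stationary_rule q) F [x0]"
      unfolding hxs by (rule stat_zero[OF zs]) (use x0 in simp)
    show ?thesis
    proof (cases "z = 0")
      case True
      have W0: "W = 0" unfolding W_def True by simp
      have U: "payoff \<delta> (stationary_rule q) F [x0] * (1 - (1 - q) * \<delta>) = q * x0"
        unfolding F' True by (rule stat_U0_zero[OF q01 x0(1) s dd])
      have qr: "q * (1 - rho x * \<delta>) = rho x * (1 - \<delta>)" using q_rho[OF xr d] unfolding q_def .
      have qr2: "q = rho x * (1 - (1 - q) * \<delta>)" using qr by (simp add: algebra_simps)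
      have dp: "0 < 1 - (1 - q) * \<delta>"
      proof -
        have "(1 - q) * \<delta> \<le> 1 * \<delta>" using q01 d by (intro mult_right_mono) auto
        then show ?thesis using d by linarith
      qed
      have "payoff \<delta> (stationary_rule q) F [x0] * (1 - (1 - q) * \<delta>) = (rho x * x0) * (1 - (1 - q) * \<delta>)"
        unfolding U by (subst qr2) (simp add: algebra_simps)
      then have "payoff \<delta> (stationary_rule q) F [x0] = rho x * x0" using dp by simp
      then show ?thesis using eqU bh W0 x0 by simp
    next
      case False
      then have zp: "0 < z" using z0 by simp
      have U: "payoff \<delta> (stationary_rule q) F [x0] * (1 - (1 - q) * \<delta> * (1 - \<sigma>)) = q * x0 + (1 - q) * \<delta> * \<sigma> * max x0 z"
        unfolding F' by (rule stat_U0[OF q01 x0(1) zp s dd])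
      have "rho x * max x0 W \<le> payoff \<delta> (stationary_rule q) F [x0]"
        using U_ge[OF xr d s zp x0(1) xz[OF z, folded x_def] U[unfolded q_def]] unfolding W_def q_def by simp
      then show ?thesis using eqU bh by simp
    qed
  qed
  show ?thesis using P1 P2 UB LB unfolding q_def x_def by blast
qed

end



context
  fixes \<delta> :: real and X :: "real set" and x0 :: real
  assumes d: "0 < \<delta>" "\<delta> < 1"
    and Xp: "X \<subseteq> {0..}" and X0: "0 \<in> X" and bdd: "bdd_above X"
    and x0: "0 < x0" "x0 \<le> Sup X"
begin

lemma prior_lemma:
  assumes h: "h \<in> histories X x0" and mu: "\<mu> \<in> consistent_priors (binary_envs X) h"
  shows "(\<forall>p\<in>decision_rules. 0 \<le> payoff_prior \<delta> p \<mu> h) \<and> 0 < value_prior \<delta> \<mu> h \<and>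
     (\<forall>p\<in>decision_rules. payoff_prior \<delta> p \<mu> h \<le> value_prior \<delta> \<mu> h) \<and>
     rho (x0 / Sup X) * value_prior \<delta> \<mu> h \<le> payoff_prior \<delta> (stationary_rule (q_star \<delta> (x0 / Sup X))) \<mu> h"
proof -
  define x where "x = x0 / Sup X"
  define qb where "qb = stationary_rule (q_star \<delta> x)"
  have xr: "0 < x" "x \<le> 1" using xx[OF d Xp X0 bdd x0] unfolding x_def by auto
  have r0: "0 \<le> rho x" using rho_gt[OF xr d] by simp
  have fin: "finite (set_pmf \<mu>)" and sub: "set_pmf \<mu> \<subseteq> {F \<in> binary_envs X. consistent F h}"
    using mu unfolding consistent_priors_def priors_def by auto
  define S where "S = (\<Sum>G\<in>set_pmf \<mu>. pmf \<mu> G * likelihood G h)"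
  have Sp: "0 < S" unfolding S_def
  proof (rule sum_pos[OF fin])
    show "set_pmf \<mu> \<noteq> {}" by (rule set_pmf_not_empty)
    fix G assume G: "G \<in> set_pmf \<mu>"
    have "0 < pmf \<mu> G" using G by (simp add: pmf_positive)
    moreover have "0 < likelihood G h" using G sub unfolding consistent_def by auto
    ultimately show "0 < pmf \<mu> G * likelihood G h" by simp
  qed
  have post: "\<And>F. posterior \<mu> h F = pmf \<mu> F * likelihood F h / S"
    unfolding posterior_def S_def by simp
  have post0: "\<And>F. F \<in> set_pmf \<mu> \<Longrightarrow> 0 \<le> posterior \<mu> h F"
    unfolding post using Sp sub unfolding consistent_def by (auto intro!: divide_nonneg_pos)
  have post1: "(\<Sum>F\<in>set_pmf \<mu>. posterior \<mu> h F) = 1"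
    unfolding post using Sp by (simp add: sum_divide_distrib[symmetric] S_def[symmetric])
  have env: "\<forall>F\<in>set_pmf \<mu>. (\<forall>p\<in>decision_rules. 0 \<le> payoff \<delta> p F h) \<and> payoff \<delta> (\<lambda>_. 1) F h = best h \<and>
    (\<exists>B. (\<forall>p\<in>decision_rules. payoff \<delta> p F h \<le> B) \<and> rho x * B \<le> payoff \<delta> qb F h)"
    using env_lemma[OF d Xp X0 bdd x0 h] sub unfolding x_def qb_def by blast
  then obtain Bf where Bf: "\<forall>F\<in>set_pmf \<mu>. (\<forall>p\<in>decision_rules. payoff \<delta> p F h \<le> Bf F) \<and> rho x * Bf F \<le> payoff \<delta> qb F h"
    by metis
  define VB where "VB = (\<Sum>F\<in>set_pmf \<mu>. posterior \<mu> h F * Bf F)"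
  have P0: "\<forall>p\<in>decision_rules. 0 \<le> payoff_prior \<delta> p \<mu> h"
    unfolding payoff_prior_def using env post0 by (auto intro!: sum_nonneg)
  have PU: "\<And>p. p \<in> decision_rules \<Longrightarrow> payoff_prior \<delta> p \<mu> h \<le> VB"
    unfolding payoff_prior_def VB_def using Bf post0 by (auto intro!: sum_mono mult_left_mono)
  have bddP: "bdd_above ((\<lambda>p. payoff_prior \<delta> p \<mu> h) ` decision_rules)"
    using PU by (auto intro!: bdd_aboveI)
  have ne: "decision_rules \<noteq> {}" using one_rule by auto
  have VU: "value_prior \<delta> \<mu> h \<le> VB"
    unfolding value_prior_def by (rule cSUP_least[OF ne PU])
  have VL: "\<And>p. p \<in> decision_rules \<Longrightarrow> payoff_prior \<delta> p \<mu> h \<le> value_prior \<delta> \<mu> h"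
    unfolding value_prior_def by (rule cSUP_upper[OF _ bddP])
  have "payoff_prior \<delta> (\<lambda>_. 1) \<mu> h = (\<Sum>F\<in>set_pmf \<mu>. posterior \<mu> h F * best h)"
    unfolding payoff_prior_def using env by (intro sum.cong) auto
  also have "\<dots> = best h" using post1 by (simp add: sum_distrib_right[symmetric])
  finally have "payoff_prior \<delta> (\<lambda>_. 1) \<mu> h = best h" .
  moreover have "x0 \<le> best h" using h unfolding histories_def by (auto intro: best_ge)
  ultimately have Vp: "0 < value_prior \<delta> \<mu> h" using VL[OF one_rule] x0 by simp
  have "rho x * VB = (\<Sum>F\<in>set_pmf \<mu>. posterior \<mu> h F * (rho x * Bf F))"
    unfolding VB_def by (simp add: sum_distrib_left algebra_simps)
  also have "\<dots> \<le> payoff_prior \<delta> qb \<mu> h"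
    unfolding payoff_prior_def using Bf post0 by (auto intro!: sum_mono mult_left_mono)
  finally have "rho x * value_prior \<delta> \<mu> h \<le> payoff_prior \<delta> qb \<mu> h"
    using VU r0 by (meson mult_left_mono order_trans)
  then show ?thesis using P0 Vp VL unfolding x_def qb_def by blast
qed

lemma stat_zero_val:
  "payoff \<delta> (stationary_rule (q_star \<delta> (x0 / Sup X))) (binary_env 0 0) [x0] = rho (x0 / Sup X) * x0"
proof -
  define x where "x = x0 / Sup X"
  define q where "q = q_star \<delta> x"
  have xr: "0 < x" "x \<le> 1" using xx[OF d Xp X0 bdd x0] unfolding x_def by auto
  have q01: "0 \<le> q" "q \<le> 1" using q_bounds[OF xr d] unfolding q_def by auto
  have dd: "0 \<le> \<delta>" "\<delta> < 1" using d by auto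
  have U: "payoff \<delta> (stationary_rule q) (binary_env 0 0) [x0] * (1 - (1 - q) * \<delta>) = q * x0"
    by (rule stat_U0_zero[OF q01 x0(1) _ _ dd]) auto
  have qr: "q * (1 - rho x * \<delta>) = rho x * (1 - \<delta>)" using q_rho[OF xr d] unfolding q_def .
  have qr2: "q = rho x * (1 - (1 - q) * \<delta>)" using qr by (simp add: algebra_simps)
  have dp: "0 < 1 - (1 - q) * \<delta>"
  proof -
    have "(1 - q) * \<delta> \<le> 1 * \<delta>" using q01 d by (intro mult_right_mono) auto
    then show ?thesis using d by linarith
  qed
  have "payoff \<delta> (stationary_rule q) (binary_env 0 0) [x0] * (1 - (1 - q) * \<delta>) = (rho x * x0) * (1 - (1 - q) * \<delta>)"
    unfolding U by (subst qr2) (simp add: algebra_simps)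
  then show ?thesis using dp unfolding q_def x_def by simp
qed

lemma F0_facts:
  shows "binary_env 0 0 \<in> binary_envs X"
    and "\<And>t. consistent (binary_env 0 0) (x0 # replicate t 0)"
    and "\<And>t. x0 # replicate t 0 \<in> histories X x0"
proof -
  show "binary_env 0 0 \<in> binary_envs X" unfolding binary_envs_def using X0 by force
  fix t
  have "pmf (binary_env 0 0) 0 = 1" unfolding binary_env_def by simp
  then show "consistent (binary_env 0 0) (x0 # replicate t 0)"
    unfolding consistent_def likelihood_def by simp
  show "x0 # replicate t 0 \<in> histories X x0" unfolding histories_def using X0 by auto
qed

lemma value_F0:
  "value_prior \<delta> (return_pmf (binary_env 0 0)) (x0 # replicate t 0) = x0"
proof -
  let ?h = "x0 # replicate t 0"
  have vh: "vh ?h" unfolding vh_def using x0 by auto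
  have rz: "set (replicate t (0::real)) \<subseteq> {0}" by (simp add: set_replicate_conv_if)
  have bh: "best ?h = x0" using best_zeros[OF rz, of x0 "[]"] x0 by (simp add: best_def)
  have dd: "0 \<le> \<delta>" "\<delta> < 1" using d by auto
  have ub: "\<And>p. p \<in> decision_rules \<Longrightarrow> payoff \<delta> p (binary_env 0 0) ?h \<le> x0"
    using payoff_ub[OF _ vh _ _ _ dd, of _ 0 0] bh x0 by simp
  have st: "payoff \<delta> (\<lambda>_. 1) (binary_env 0 0) ?h = x0"
    using payoff_stop[OF one_rule vh _ _ _ dd, of 0 0] bh by simp
  have ne: "decision_rules \<noteq> {}" using one_rule by auto
  have bddP: "bdd_above ((\<lambda>p. payoff \<delta> p (binary_env 0 0) ?h) ` decision_rules)"
    using ub by (auto intro!: bdd_aboveI)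
  have "(SUP p\<in>decision_rules. payoff \<delta> p (binary_env 0 0) ?h) = x0"
  proof (rule antisym)
    show "(SUP p\<in>decision_rules. payoff \<delta> p (binary_env 0 0) ?h) \<le> x0" by (rule cSUP_least[OF ne ub])
    show "x0 \<le> (SUP p\<in>decision_rules. payoff \<delta> p (binary_env 0 0) ?h)"
      using cSUP_upper[OF one_rule bddP] st by simp
  qed
  then show ?thesis using post_return(2)[OF F0_facts(2)] by simp
qed

lemma part_a:
  "perf_ratio \<delta> X x0 (binary_envs X) (stationary_rule (q_star \<delta> (x0 / Sup X))) = rho (x0 / Sup X)"
proof -
  define qb where "qb = stationary_rule (q_star \<delta> (x0 / Sup X))"
  define A where "A = {payoff_prior \<delta> qb \<mu> h / value_prior \<delta> \<mu> h | h \<mu>.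
       h \<in> histories X x0 \<and> \<mu> \<in> consistent_priors (binary_envs X) h}"
  have lb: "\<And>a. a \<in> A \<Longrightarrow> rho (x0 / Sup X) \<le> a"
  proof -
    fix a assume "a \<in> A"
    then obtain h \<mu> where a: "a = payoff_prior \<delta> qb \<mu> h / value_prior \<delta> \<mu> h"
      and h: "h \<in> histories X x0" and mu: "\<mu> \<in> consistent_priors (binary_envs X) h"
      unfolding A_def by auto
    from prior_lemma[OF h mu] show "rho (x0 / Sup X) \<le> a" unfolding a qb_def
      by (simp add: pos_le_divide_eq)
  qed
  let ?h = "[x0]" and ?\<mu> = "return_pmf (binary_env 0 0)"
  have h0: "?h \<in> histories X x0" using F0_facts(3)[of 0] by simp
  have c0: "consistent (binary_env 0 0) ?h" using F0_facts(2)[of 0] by simp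
  have mu0: "?\<mu> \<in> consistent_priors (binary_envs X) ?h"
    unfolding consistent_priors_def priors_def using F0_facts(1) c0 by simp
  have eq: "rho (x0 / Sup X) = payoff_prior \<delta> qb ?\<mu> ?h / value_prior \<delta> ?\<mu> ?h"
    using post_return(1)[OF c0] value_F0[of 0] stat_zero_val x0 unfolding qb_def by simp
  have elem: "rho (x0 / Sup X) \<in> A" unfolding A_def mem_Collect_eq
    by (intro exI[where x="?h"] exI[where x="?\<mu>"] conjI eq h0 mu0)
  have bddA: "bdd_below A" using lb by (auto intro!: bdd_belowI)
  have "Inf A = rho (x0 / Sup X)"
  proof (rule antisym)
    show "Inf A \<le> rho (x0 / Sup X)" by (rule cInf_lower[OF elem bddA])
    show "rho (x0 / Sup X) \<le> Inf A" using elem lb by (auto intro!: cInf_greatest)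
  qed
  then show ?thesis unfolding perf_ratio_def A_def qb_def .
qed

end



lemma step_ineq:
  fixes a x0 W \<delta> \<sigma> z \<gamma> A B u u' v v' :: real
  assumes a: "0 \<le> a" "a \<le> 1" and x0: "0 < x0" and W: "0 < W"
    and d: "0 \<le> \<delta>" "\<delta> \<le> 1" and s: "0 \<le> \<sigma>" "\<sigma> \<le> 1" and g: "0 \<le> \<gamma>"
    and Wd: "W * (1 - \<delta> + \<delta> * \<sigma>) = \<delta> * \<sigma> * z"
    and u: "u = a * x0 + (1 - a) * \<delta> * u'"
    and v: "v \<le> a * x0 + (1 - a) * \<delta> * ((1 - \<sigma>) * v' + \<sigma> * z)"
    and u': "A \<le> u' / x0" and v': "B \<le> v' / W"
    and i: "\<gamma> * (1 - A) \<le> B - x0 / W"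
    and ii: "(1 - B) * (1 - \<delta> + \<delta> * \<sigma>) \<le> \<gamma> * (1 - \<delta>) * A"
  shows "\<gamma> * (u / x0 - A) + (v / W - B) \<le> \<delta> * (\<gamma> * (u' / x0 - A) + (v' / W - B))"
proof -
  define U' where "U' = u' / x0"
  define V' where "V' = v' / W"
  have h1: "u / x0 = a + (1 - a) * \<delta> * U'" unfolding u U'_def using x0 by (simp add: field_simps)
  have zW: "\<delta> * \<sigma> * z / W = 1 - \<delta> + \<delta> * \<sigma>" using Wd W by (simp add: field_simps)
  have "v / W \<le> (a * x0 + (1 - a) * \<delta> * ((1 - \<sigma>) * v' + \<sigma> * z)) / W"
    using v W by (simp add: divide_right_mono)
  also have "\<dots> = a * (x0 / W) + (1 - a) * \<delta> * (1 - \<sigma>) * V' + (1 - a) * (\<delta> * \<sigma> * z / W)"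
    unfolding V'_def using W by (simp add: field_simps)
  finally have h2: "v / W \<le> a * (x0 / W) + (1 - a) * \<delta> * (1 - \<sigma>) * V' + (1 - a) * (1 - \<delta> + \<delta> * \<sigma>)"
    unfolding zW .
  have "\<gamma> * (u / x0 - A) + (v / W - B) \<le> \<gamma> * (a + (1 - a) * \<delta> * U' - A) +
      (a * (x0 / W) + (1 - a) * \<delta> * (1 - \<sigma>) * V' + (1 - a) * (1 - \<delta> + \<delta> * \<sigma>) - B)"
    unfolding h1 using h2 by simp
  also have "\<dots> = a * (\<gamma> + x0 / W - \<gamma> * A - B) + (1 - a) * (\<gamma> * \<delta> * (U' - A) + \<delta> * (1 - \<sigma>) * (V' - B)
      + ((1 - B) * (1 - \<delta> + \<delta> * \<sigma>) - \<gamma> * (1 - \<delta>) * A))"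
    by (simp add: algebra_simps)
  also have "\<dots> \<le> a * 0 + (1 - a) * (\<gamma> * \<delta> * (U' - A) + \<delta> * (V' - B) + 0)"
  proof (intro add_mono mult_left_mono)
    show "\<gamma> + x0 / W - \<gamma> * A - B \<le> 0" using i by (simp add: algebra_simps)
    show "(1 - B) * (1 - \<delta> + \<delta> * \<sigma>) - \<gamma> * (1 - \<delta>) * A \<le> 0" using ii by simp
    have "0 \<le> V' - B" using v' unfolding V'_def by simp
    then have "(1 - \<sigma>) * (V' - B) \<le> 1 * (V' - B)" using s by (intro mult_right_mono) auto
    then show "\<delta> * (1 - \<sigma>) * (V' - B) \<le> \<delta> * (V' - B)" using d by (simp add: mult_left_mono mult.assoc)
  qed (use a g d in auto)
  also have "\<dots> \<le> 1 * (\<gamma> * \<delta> * (U' - A) + \<delta> * (V' - B))"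
  proof (simp only: add_0_right mult_zero_right add_0_left, rule mult_right_mono)
    show "1 - a \<le> 1" using a by simp
    have "0 \<le> U' - A" "0 \<le> V' - B" using u' v' unfolding U'_def V'_def by auto
    then show "0 \<le> \<gamma> * \<delta> * (U' - A) + \<delta> * (V' - B)" using g d by simp
  qed
  also have "\<dots> = \<delta> * (\<gamma> * (u' / x0 - A) + (v' / W - B))" unfolding U'_def V'_def by (simp add: algebra_simps)
  finally show ?thesis .
qed



context
  fixes x \<delta> :: real
  assumes x: "0 < x" "x \<le> \<delta>^2 / (2 - \<delta>)" and d: "0 < \<delta>" "\<delta> < 1"
begin

lemma kx_lt1: "\<delta>^2 / (2 - \<delta>) < 1"
proof -
  have "\<delta>^2 < 2 - \<delta>" using d by (simp add: power2_eq_square) (smt (verit) mult_less_cancel_right1)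
  then show ?thesis using d by simp
qed

lemma x_lt1: "x < 1" using x kx_lt1 by linarith

lemma xs_lt4: "x + sqrt (x * (x + 8)) < 4"
proof -
  have "x * (x + 8) < (4 - x)^2" using x_lt1 by (simp add: power2_eq_square algebra_simps)
  then have "sqrt (x * (x + 8)) < sqrt ((4 - x)^2)" by (rule real_sqrt_less_mono)
  then show ?thesis using x_lt1 by simp
qed

lemma xs_le: "(2 - \<delta>) * (x + sqrt (x * (x + 8))) \<le> 4 * \<delta>"
proof -
  define k where "k = \<delta>^2 / (2 - \<delta>)"
  have dp: "0 < 2 - \<delta>" using d by simp
  have kk: "k * (k + 8) = (\<delta> * (4 - \<delta>) / (2 - \<delta>))^2"
    unfolding k_def using dp by (simp add: field_simps power2_eq_square)
  have "x * (x + 8) \<le> k * (k + 8)" using x unfolding k_def[symmetric] by (intro mult_mono) auto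
  then have "sqrt (x * (x + 8)) \<le> sqrt ((\<delta> * (4 - \<delta>) / (2 - \<delta>))^2)" unfolding kk by (rule real_sqrt_le_mono)
  also have "\<dots> = \<delta> * (4 - \<delta>) / (2 - \<delta>)" using d by simp
  finally have "x + sqrt (x * (x + 8)) \<le> k + \<delta> * (4 - \<delta>) / (2 - \<delta>)" using x unfolding k_def by simp
  also have "\<dots> = (\<delta>^2 + \<delta> * (4 - \<delta>)) / (2 - \<delta>)" unfolding k_def by (simp add: add_divide_distrib)
  also have "\<delta>^2 + \<delta> * (4 - \<delta>) = 4 * \<delta>" by (simp add: power2_eq_square algebra_simps)
  finally show ?thesis using dp by (simp add: field_simps)
qed

definition sig_star :: "real \<Rightarrow> real \<Rightarrow> real" where
  "sig_star d y = (1 - d) * ((y + sqrt (y * (y + 8))) / 4) / ((1 - rho y) * d)"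

lemma eps_pos: "0 < 1 - rho x"
  using xs_lt4 unfolding rho_def by simp

lemma sig_bounds: "0 < sig_star \<delta> x \<and> sig_star \<delta> x \<le> 1"
proof -
  define s where "s = sqrt (x * (x + 8))"
  have s0: "0 \<le> s" unfolding s_def using x by simp
  have e: "1 - rho x = (4 - x - s) / 8" unfolding rho_def s_def by (simp add: field_simps)
  have ep: "0 < 4 - x - s" using xs_lt4 unfolding s_def by simp
  have "0 < sig_star \<delta> x" unfolding sig_star_def s_def[symmetric] e using d x s0 ep
    by (intro divide_pos_pos mult_pos_pos) auto
  moreover have "sig_star \<delta> x \<le> 1"
  proof -
    have h: "(2 - \<delta>) * (x + s) \<le> 4 * \<delta>" using xs_le unfolding s_def[symmetric] .
    have "(4 - x - s) / 8 * \<delta> - (1 - \<delta>) * ((x + s) / 4) = (4 * \<delta> - (2 - \<delta>) * (x + s)) / 8"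
      by (simp add: field_simps)
    then have "(1 - \<delta>) * ((x + s) / 4) \<le> (4 - x - s) / 8 * \<delta>" using h by simp
    then show ?thesis unfolding sig_star_def s_def[symmetric] e using d ep
      by (simp add: divide_le_eq)
  qed
  ultimately show ?thesis by simp
qed

lemma base_ineq:
  defines "\<sigma> \<equiv> sig_star \<delta> x"
  shows "(1 - rho x) * (1 - \<delta> + \<delta> * \<sigma>) / ((1 - \<delta>) * rho x) * (1 - rho x)
         + x * (1 - \<delta> + \<delta> * \<sigma>) / (\<delta> * \<sigma>) = rho x"
proof -
  define \<rho> where "\<rho> = rho x"
  define \<epsilon> where "\<epsilon> = 1 - \<rho>"
  have xr: "0 < x" "x \<le> 1" using x x_lt1 by auto
  have ep: "0 < \<epsilon>" using eps_pos unfolding \<epsilon>_def \<rho>_def .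
  have rp: "0 < \<rho>" using rho_gt[OF xr d] unfolding \<rho>_def by simp
  have sp: "0 < \<sigma>" using sig_bounds unfolding \<sigma>_def by simp
  have es: "\<epsilon> * \<delta> * \<sigma> = (1 - \<delta>) * ((x + sqrt (x * (x + 8))) / 4)"
    unfolding \<sigma>_def sig_star_def \<epsilon>_def \<rho>_def using ep d unfolding \<epsilon>_def \<rho>_def by simp
  have G: "(\<rho> * (1 - \<delta>) * x + \<epsilon> * \<delta> * \<sigma>) * (1 - \<delta> + \<delta> * \<sigma>) - \<rho> * \<delta> * \<sigma> * (1 - \<delta> + \<epsilon> * \<delta> * \<sigma>) = 0"
  proof -
    have Gs: "(\<rho> * (1 - \<delta>) * x + \<epsilon> * \<delta> * \<sigma>) * (1 - \<delta> + \<delta> * \<sigma>) - \<rho> * \<delta> * \<sigma> * (1 - \<delta> + \<epsilon> * \<delta> * \<sigma>)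
      = (\<epsilon> * \<delta> * \<sigma> - (1 - \<delta>) * ((x + sqrt (x * (x + 8))) / 4))^2"
      using G_square[OF xr d, of \<sigma>] unfolding \<rho>_def[symmetric] \<epsilon>_def[symmetric] .
    show ?thesis by (subst Gs) (simp add: es)
  qed
  have H: "(1 - \<delta>) * \<rho> * \<rho> * \<delta> * \<sigma> - \<epsilon> * \<epsilon> * \<delta> * \<sigma> * (1 - \<delta> + \<delta> * \<sigma>) - (1 - \<delta>) * \<rho> * x * (1 - \<delta> + \<delta> * \<sigma>)
     = - ((\<rho> * (1 - \<delta>) * x + \<epsilon> * \<delta> * \<sigma>) * (1 - \<delta> + \<delta> * \<sigma>) - \<rho> * \<delta> * \<sigma> * (1 - \<delta> + \<epsilon> * \<delta> * \<sigma>))"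
    unfolding \<epsilon>_def by (simp add: algebra_simps)
  have H0: "\<epsilon> * \<epsilon> * \<delta> * \<sigma> * (1 - \<delta> + \<delta> * \<sigma>) + (1 - \<delta>) * \<rho> * x * (1 - \<delta> + \<delta> * \<sigma>) = (1 - \<delta>) * \<rho> * \<rho> * \<delta> * \<sigma>"
    using H G by simp
  have "\<epsilon> * (1 - \<delta> + \<delta> * \<sigma>) / ((1 - \<delta>) * \<rho>) * \<epsilon> + x * (1 - \<delta> + \<delta> * \<sigma>) / (\<delta> * \<sigma>)
      = (\<epsilon> * \<epsilon> * \<delta> * \<sigma> * (1 - \<delta> + \<delta> * \<sigma>) + (1 - \<delta>) * \<rho> * x * (1 - \<delta> + \<delta> * \<sigma>)) / ((1 - \<delta>) * \<rho> * \<delta> * \<sigma>)"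
    using d rp sp by (simp add: field_simps)
  also have "\<dots> = \<rho>" unfolding H0 using d rp sp by (simp add: field_simps)
  finally show ?thesis unfolding \<epsilon>_def \<rho>_def .
qed

end



lemma pmf_bin0: "0 \<le> \<sigma> \<Longrightarrow> \<sigma> < 1 \<Longrightarrow> 0 < pmf (binary_env z \<sigma>) 0"
proof -
  assume s: "0 \<le> \<sigma>" "\<sigma> < 1"
  have "pmf (bernoulli_pmf \<sigma>) False \<noteq> 0" using s by simp
  then have "False \<in> set_pmf (bernoulli_pmf \<sigma>)" by (simp add: set_pmf_iff)
  then have "0 \<in> set_pmf (binary_env z \<sigma>)" unfolding binary_env_def by force
  then show ?thesis by (simp add: pmf_positive)
qed

context
  fixes \<delta> :: real and X :: "real set" and x0 :: real
  assumes d: "0 < \<delta>" "\<delta> < 1"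
    and Xp: "X \<subseteq> {0..}" and X0: "0 \<in> X" and bdd: "bdd_above X"
    and x0: "0 < x0" "x0 \<le> Sup X"
    and hx: "x0 / Sup X \<le> \<delta>^2 / (2 - \<delta>)"
begin

lemma part_b_bound:
  assumes p: "p \<in> decision_rules"
  shows "perf_ratio \<delta> X x0 (binary_envs X) p \<le> rho (x0 / Sup X)"
proof -
  define x where "x = x0 / Sup X"
  define \<rho> where "\<rho> = rho x"
  define \<sigma>s where "\<sigma>s = sig_star \<delta> x"
  define \<gamma> where "\<gamma> = (1 - \<rho>) * (1 - \<delta> + \<delta> * \<sigma>s) / ((1 - \<delta>) * \<rho>)"
  define C where "C = x * (1 - \<delta> + \<delta> * \<sigma>s) / (\<delta> * \<sigma>s)"
  have xp: "0 < x" using xx[OF d Xp X0 bdd x0] unfolding x_def by simp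
  have hx': "x \<le> \<delta>^2 / (2 - \<delta>)" using hx unfolding x_def .
  have x1: "x < 1" using x_lt1[OF xp hx' d] .
  have xr: "0 < x" "x \<le> 1" using xp x1 by auto
  have rp: "1/2 < \<rho>" "\<rho> \<le> 1" using rho_gt[OF xr d] rho_le1[OF xr d] unfolding \<rho>_def by auto
  have ep: "0 < 1 - \<rho>" using eps_pos[OF xp hx' d] unfolding \<rho>_def .
  have sb: "0 < \<sigma>s" "\<sigma>s \<le> 1" using sig_bounds[OF xp hx' d] unfolding \<sigma>s_def by auto
  have base: "\<gamma> * (1 - \<rho>) + C = \<rho>"
    using base_ineq[OF xp hx' d] unfolding \<gamma>_def C_def \<rho>_def \<sigma>s_def .
  have g0: "0 \<le> \<gamma>" unfolding \<gamma>_def using ep d sb rp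
    by (intro divide_nonneg_pos mult_nonneg_nonneg mult_pos_pos) (auto simp: add_nonneg_nonneg)
  have Cp: "0 < C" unfolding C_def using xp d sb by (intro divide_pos_pos mult_pos_pos) (auto simp: add_pos_nonneg)
  have gdef: "\<gamma> * (1 - \<delta>) * \<rho> = (1 - \<rho>) * (1 - \<delta> + \<delta> * \<sigma>s)"
    unfolding \<gamma>_def using d rp by (simp add: field_simps)
  have xb: "0 < Sup X" using xb_pos[OF d Xp X0 bdd x0] .
  define A where "A = (\<lambda>p. {payoff_prior \<delta> p \<mu> h / value_prior \<delta> \<mu> h | h \<mu>.
       h \<in> histories X x0 \<and> \<mu> \<in> consistent_priors (binary_envs X) h})"
  have bddA: "bdd_below (A p)"
  proof (rule bdd_belowI)
    fix a assume "a \<in> A p"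
    then obtain h \<mu> where a: "a = payoff_prior \<delta> p \<mu> h / value_prior \<delta> \<mu> h"
      and h: "h \<in> histories X x0" and mu: "\<mu> \<in> consistent_priors (binary_envs X) h"
      unfolding A_def by auto
    from prior_lemma[OF d Xp X0 bdd x0 h mu] p show "0 \<le> a" unfolding a by auto
  qed
  have rle: "perf_ratio \<delta> X x0 (binary_envs X) p \<le> payoff_prior \<delta> p \<mu> h / value_prior \<delta> \<mu> h"
    if "h \<in> histories X x0" "\<mu> \<in> consistent_priors (binary_envs X) h" for h \<mu>
  proof -
    have "payoff_prior \<delta> p \<mu> h / value_prior \<delta> \<mu> h \<in> A p" unfolding A_def using that by blast
    moreover have "perf_ratio \<delta> X x0 (binary_envs X) p = Inf (A p)" unfolding perf_ratio_def A_def by simp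
    ultimately show ?thesis using cInf_lower[OF _ bddA] by simp
  qed
  define r where "r = perf_ratio \<delta> X x0 (binary_envs X) p"
  have "r \<le> \<rho> + \<eta>" if etap: "0 < \<eta>" for \<eta>
  proof (rule ccontr)
    assume "\<not> r \<le> \<rho> + \<eta>"
    then have rgt: "\<rho> + \<eta> < r" by simp
    define \<kappa> where "\<kappa> = min 1 (\<eta> / (3 * C))"
    have kp: "0 < \<kappa>" "\<kappa> \<le> 1" "\<kappa> \<le> \<eta> / (3 * C)" unfolding \<kappa>_def using etap Cp by auto
    define \<sigma> where "\<sigma> = \<sigma>s / (1 + \<kappa>)"
    have s: "0 < \<sigma>" "\<sigma> < 1" "\<sigma> \<le> \<sigma>s" unfolding \<sigma>_def using sb kp by (auto simp: field_simps)
    have "max x0 (Sup X / (1 + \<kappa>)) < Sup X"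
      using x1 xb kp unfolding x_def by (auto simp: field_simps)
    then obtain z where zX: "z \<in> X" and zgt: "max x0 (Sup X / (1 + \<kappa>)) < z"
      using less_cSup_iff[of X] X0 bdd by blast
    have zx0: "x0 < z" using zgt by simp
    have zp: "0 < z" using zx0 x0 by simp
    have zS: "Sup X < (1 + \<kappa>) * z" using zgt kp by (simp add: field_simps)
    have tx: "x0 / z \<le> x * (1 + \<kappa>)"
    proof -
      have "x0 * Sup X \<le> x0 * ((1 + \<kappa>) * z)" using zS x0 by simp
      then show ?thesis unfolding x_def using zp xb by (simp add: field_simps)
    qed
    define W where "W = \<delta> * \<sigma> * z / (1 - \<delta> + \<delta> * \<sigma>)"
    have pos: "0 < 1 - \<delta> + \<delta> * \<sigma>" using d s by (simp add: add_pos_nonneg)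
    have Wp: "0 < W" unfolding W_def using d s zp pos by simp
    have Wd: "W * (1 - \<delta> + \<delta> * \<sigma>) = \<delta> * \<sigma> * z" unfolding W_def using pos by simp
    have Wz: "W \<le> z"
    proof -
      have "\<delta> * \<sigma> * z \<le> (1 - \<delta> + \<delta> * \<sigma>) * z" using d zp by (intro mult_right_mono) auto
      then show ?thesis unfolding W_def using pos by (simp add: divide_le_eq mult.commute)
    qed
    have x0W: "x0 / W \<le> C + \<eta>"
    proof -
      have sp': "0 < \<delta> * \<sigma>" using d s by simp
      have e0: "x0 / W = (x0 / z) * ((1 - \<delta>) / (\<delta> * \<sigma>) + 1)"
        unfolding W_def using sp' zp pos d(1) s(1) by (simp add: field_simps)
      have e00: "(1 - \<delta>) / (\<delta> * \<sigma>) = (1 - \<delta>) * (1 + \<kappa>) / (\<delta> * \<sigma>s)"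
        unfolding \<sigma>_def using kp by (simp add: field_simps)
      have e1: "x0 / W = (x0 / z) * ((1 - \<delta>) * (1 + \<kappa>) / (\<delta> * \<sigma>s) + 1)"
        unfolding e0 e00 ..
      have "(1 - \<delta>) * (1 + \<kappa>) / (\<delta> * \<sigma>s) + 1 \<le> (1 + \<kappa>) * ((1 - \<delta>) / (\<delta> * \<sigma>s) + 1)"
        using kp by (simp add: algebra_simps)
      then have "x0 / W \<le> (x * (1 + \<kappa>)) * ((1 + \<kappa>) * ((1 - \<delta>) / (\<delta> * \<sigma>s) + 1))"
        unfolding e1 using tx x0 zp d sb kp xp
        by (intro mult_mono) (auto intro!: add_nonneg_nonneg divide_nonneg_pos)
      also have "\<dots> = (1 + \<kappa>) * (1 + \<kappa>) * C"
        unfolding C_def using d sb by (simp add: field_simps)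
      also have "\<dots> \<le> (1 + 3 * \<kappa>) * C"
      proof -
        have "(1 + \<kappa>) * (1 + \<kappa>) \<le> 1 + 3 * \<kappa>" using kp by (simp add: algebra_simps power2_eq_square)
        then show ?thesis using Cp by (intro mult_right_mono) auto
      qed
      also have "\<dots> \<le> C + \<eta>"
      proof -
        have "3 * \<kappa> * C \<le> \<eta>" using kp Cp by (simp add: field_simps)
        then show ?thesis by (simp add: algebra_simps)
      qed
      finally show ?thesis .
    qed
    have ci: "\<gamma> * (1 - \<rho>) \<le> (\<rho> + \<eta>) - x0 / W" using base x0W by simp
    have cii: "(1 - (\<rho> + \<eta>)) * (1 - \<delta> + \<delta> * \<sigma>) \<le> \<gamma> * (1 - \<delta>) * \<rho>"
    proof (cases "1 - (\<rho> + \<eta>) \<le> 0")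
      case True
      then have "(1 - (\<rho> + \<eta>)) * (1 - \<delta> + \<delta> * \<sigma>) \<le> 0" using pos by (simp add: mult_nonpos_nonneg)
      also have "0 \<le> \<gamma> * (1 - \<delta>) * \<rho>" using g0 d rp by simp
      finally show ?thesis .
    next
      case False
      have "(1 - (\<rho> + \<eta>)) * (1 - \<delta> + \<delta> * \<sigma>) \<le> (1 - \<rho>) * (1 - \<delta> + \<delta> * \<sigma>s)"
        using False etap pos s d by (intro mult_mono) auto
      then show ?thesis unfolding gdef .
    qed
    define hh where "hh = (\<lambda>t::nat. x0 # replicate t (0::real))"
    define F1 where "F1 = binary_env z \<sigma>"
    define F0 where "F0 = binary_env 0 0"
    define u where "u = (\<lambda>t. payoff \<delta> p F0 (hh t))"
    define v where "v = (\<lambda>t. payoff \<delta> p F1 (hh t))"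
    have dd: "0 \<le> \<delta>" "\<delta> < 1" using d by auto
    have s1: "0 \<le> \<sigma>" "\<sigma> \<le> 1" using s by auto
    have z0: "0 \<le> z" using zp by simp
    have vh: "\<And>t. vh (hh t)" unfolding vh_def hh_def using x0 by auto
    have rz: "\<And>t. set (replicate t (0::real)) \<subseteq> {0}" by (simp add: set_replicate_conv_if)
    have bh: "\<And>t. best (hh t) = x0"
    proof -
      fix t
      show "best (hh t) = x0" unfolding hh_def using best_zeros[OF rz[of t], of x0 "[]"] x0 by (simp add: best_def)
    qed
    have hsnoc: "\<And>t. hh t @ [0] = hh (Suc t)" unfolding hh_def by (simp add: replicate_append_same)
    have hhist: "\<And>t. hh t \<in> histories X x0" unfolding hh_def using F0_facts(3)[OF d Xp X0 bdd x0] .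
    have F1in: "F1 \<in> binary_envs X" unfolding F1_def binary_envs_def using zX s1 by blast
    have c1: "\<And>t. consistent F1 (hh t)"
      unfolding consistent_def likelihood_def hh_def F1_def using pmf_bin0[of \<sigma> z] s by simp
    have c0: "\<And>t. consistent F0 (hh t)" unfolding F0_def hh_def using F0_facts(2)[OF d Xp X0 bdd x0] .
    have mu1: "\<And>t. return_pmf F1 \<in> consistent_priors (binary_envs X) (hh t)"
      unfolding consistent_priors_def priors_def using F1in c1 by simp
    have mu0: "\<And>t. return_pmf F0 \<in> consistent_priors (binary_envs X) (hh t)"
      unfolding consistent_priors_def priors_def F0_def using F0_facts(1)[OF d Xp X0 bdd x0] c0[unfolded F0_def] by simp
    have ru: "\<And>t. r * x0 \<le> u t"
    proof -
      fix t
      have "r \<le> u t / x0"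
        using rle[OF hhist[of t] mu0[of t]] post_return(1)[OF c0[of t]] value_F0[OF d Xp X0 bdd x0, of t]
        unfolding r_def u_def F0_def hh_def by simp
      then show "r * x0 \<le> u t" using x0 by (simp add: pos_le_divide_eq)
    qed
    have rv: "\<And>t. r * W \<le> v t"
    proof -
      fix t
      let ?V = "value_prior \<delta> (return_pmf F1) (hh t)"
      have PL: "0 < ?V" "\<forall>p\<in>decision_rules. payoff_prior \<delta> p (return_pmf F1) (hh t) \<le> ?V"
        using prior_lemma[OF d Xp X0 bdd x0 hhist[of t] mu1[of t]] by auto
      have "r \<le> v t / ?V" using rle[OF hhist[of t] mu1[of t]] post_return(1)[OF c1[of t]] unfolding r_def v_def by simp
      then have rV: "r * ?V \<le> v t" using PL by (simp add: pos_le_divide_eq)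
      have "payoff \<delta> (stationary_rule 0) F1 (hh t) = payoff \<delta> (stationary_rule 0) F1 [x0]"
        unfolding hh_def by (rule stat_zero[OF rz]) (use x0 in simp)
      moreover have "payoff \<delta> (stationary_rule 0) F1 [x0] * (1 - (1 - 0) * \<delta> * (1 - \<sigma>)) = 0 * x0 + (1 - 0) * \<delta> * \<sigma> * max x0 z"
        unfolding F1_def by (rule stat_U0[OF _ _ x0(1) zp s1 dd]) auto
      ultimately have "payoff \<delta> (stationary_rule 0) F1 (hh t) = W"
        unfolding W_def using zx0 pos by (simp add: field_simps)
      moreover have "payoff_prior \<delta> (stationary_rule 0) (return_pmf F1) (hh t) \<le> ?V"
        using PL stat_rule_in[of 0] by simp
      ultimately have "W \<le> ?V" using post_return(1)[OF c1[of t]] by simp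
      moreover have "0 < r" using rgt rp etap by linarith
      ultimately have "r * W \<le> r * ?V" by simp
      then show "r * W \<le> v t" using rV by simp
    qed
    have uub: "\<And>t. u t \<le> x0"
    proof -
      fix t
      have "payoff \<delta> p (binary_env 0 0) (hh t) \<le> max (best (hh t)) (\<delta> * 0 * 0 / (1 - \<delta> + \<delta> * 0))"
        by (rule payoff_ub[OF p vh[of t]]) (use dd in auto)
      then show "u t \<le> x0" unfolding u_def F0_def bh using x0 by simp
    qed
    have vub: "\<And>t. v t \<le> max x0 W"
    proof -
      fix t
      have "payoff \<delta> p F1 (hh t) \<le> max (best (hh t)) W"
        unfolding F1_def W_def by (rule payoff_ub[OF p vh[of t] z0 s1 dd])
      then show "v t \<le> max x0 W" unfolding v_def bh .
    qed
    have p01: "\<And>g. 0 \<le> p g \<and> p g \<le> 1" using p unfolding decision_rules_def by auto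
    have urec: "\<And>t. u t = p (hh t) * x0 + (1 - p (hh t)) * \<delta> * u (Suc t)"
    proof -
      fix t
      have "payoff \<delta> p (binary_env 0 0) (hh t) = p (hh t) * best (hh t) + (1 - p (hh t)) * \<delta> *
         ((1 - 0) * payoff \<delta> p (binary_env 0 0) (hh t @ [0]) + 0 * payoff \<delta> p (binary_env 0 0) (hh t @ [0]))"
        by (rule bellman[OF p vh[of t]]) (use dd in auto)
      then show "u t = p (hh t) * x0 + (1 - p (hh t)) * \<delta> * u (Suc t)"
        unfolding u_def F0_def bh hsnoc by simp
    qed
    have vrec: "\<And>t. v t \<le> p (hh t) * x0 + (1 - p (hh t)) * \<delta> * ((1 - \<sigma>) * v (Suc t) + \<sigma> * z)"
    proof -
      fix t
      have hz: "vh (hh t @ [z])" by (rule vh_snoc[OF vh z0])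
      have "payoff \<delta> p F1 (hh t @ [z]) \<le> max (best (hh t @ [z])) W"
        using payoff_ub[OF p hz z0 s1 dd] unfolding F1_def W_def by simp
      also have "\<dots> = z" using best_snoc[of "hh t" z] bh zx0 Wz unfolding hh_def by simp
      finally have pz: "payoff \<delta> p F1 (hh t @ [z]) \<le> z" .
      have "payoff \<delta> p F1 (hh t) = p (hh t) * best (hh t) + (1 - p (hh t)) * \<delta> *
         ((1 - \<sigma>) * payoff \<delta> p F1 (hh t @ [0]) + \<sigma> * payoff \<delta> p F1 (hh t @ [z]))"
        unfolding F1_def by (rule bellman[OF p vh[of t] z0 s1 dd])
      then have "v t = p (hh t) * x0 + (1 - p (hh t)) * \<delta> * ((1 - \<sigma>) * v (Suc t) + \<sigma> * payoff \<delta> p F1 (hh t @ [z]))"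
        unfolding v_def bh hsnoc .
      also have "\<dots> \<le> p (hh t) * x0 + (1 - p (hh t)) * \<delta> * ((1 - \<sigma>) * v (Suc t) + \<sigma> * z)"
        using pz p01[of "hh t"] s1 dd by (intro add_left_mono mult_left_mono) auto
      finally show "v t \<le> p (hh t) * x0 + (1 - p (hh t)) * \<delta> * ((1 - \<sigma>) * v (Suc t) + \<sigma> * z)" .
    qed
    define D where "D = (\<lambda>t. \<gamma> * (u t / x0 - \<rho>) + (v t / W - (\<rho> + \<eta>)))"
    have Dstep: "\<And>t. D t \<le> \<delta> * D (Suc t)"
    proof -
      fix t
      have "\<rho> * x0 \<le> r * x0" using rgt etap x0 by (intro mult_right_mono) auto
      then have uA: "\<rho> \<le> u (Suc t) / x0" using order_trans[OF _ ru[of "Suc t"]] x0 by (simp add: pos_le_divide_eq)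
      have "(\<rho> + \<eta>) * W \<le> r * W" using rgt Wp by (intro mult_right_mono) auto
      then have vB: "\<rho> + \<eta> \<le> v (Suc t) / W" using order_trans[OF _ rv[of "Suc t"]] Wp by (simp add: pos_le_divide_eq)
      show "D t \<le> \<delta> * D (Suc t)" unfolding D_def
        by (rule step_ineq[OF p01[THEN conjunct1] p01[THEN conjunct2] x0(1) Wp _ _ s1 g0 Wd urec vrec uA vB ci cii])
          (use d in auto)
    qed
    have Dlow: "\<And>t. r - (\<rho> + \<eta>) \<le> D t"
    proof -
      fix t
      have "\<rho> * x0 \<le> r * x0" using rgt etap x0 by (intro mult_right_mono) auto
      then have "\<rho> \<le> u t / x0" using order_trans[OF _ ru[of t]] x0 by (simp add: pos_le_divide_eq)
      then have "0 \<le> \<gamma> * (u t / x0 - \<rho>)" using g0 by simp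
      moreover have "r \<le> v t / W" using rv[of t] Wp by (simp add: pos_le_divide_eq)
      ultimately show "r - (\<rho> + \<eta>) \<le> D t" unfolding D_def by simp
    qed
    define Cb where "Cb = \<gamma> * (1 - \<rho>) + (max x0 W / W - (\<rho> + \<eta>))"
    have Dup: "\<And>t. D t \<le> Cb"
    proof -
      fix t
      have "u t / x0 \<le> 1" using uub[of t] x0 by simp
      then have "\<gamma> * (u t / x0 - \<rho>) \<le> \<gamma> * (1 - \<rho>)" using g0 by (intro mult_left_mono) auto
      moreover have "v t / W \<le> max x0 W / W" using vub[of t] Wp by (simp add: divide_right_mono)
      ultimately show "D t \<le> Cb" unfolding D_def Cb_def by simp
    qed
    have Dn: "\<And>n. D 0 \<le> \<delta> ^ n * D n"
    proof -
      fix n show "D 0 \<le> \<delta> ^ n * D n"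
      proof (induction n)
        case 0 then show ?case by simp
      next
        case (Suc n)
        have "\<delta> ^ n * D n \<le> \<delta> ^ n * (\<delta> * D (Suc n))" using Dstep[of n] d by (intro mult_left_mono) auto
        then show ?case using Suc.IH by (simp add: algebra_simps)
      qed
    qed
    have gp: "0 < r - (\<rho> + \<eta>)" using rgt by simp
    have Cbp: "0 < Cb" using Dlow[of 0] Dup[of 0] gp by simp
    obtain n where n: "\<delta> ^ n < (r - (\<rho> + \<eta>)) / Cb" using real_arch_pow_inv[of "(r - (\<rho> + \<eta>)) / Cb" \<delta>] gp Cbp d by auto
    have "D 0 \<le> \<delta> ^ n * Cb" using Dn[of n] Dup[of n] d by (meson order_trans mult_left_mono zero_le_power less_imp_le)
    also have "\<dots> < r - (\<rho> + \<eta>)" using n Cbp by (simp add: pos_less_divide_eq)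
    finally show False using Dlow[of 0] by simp
  qed
  then have "r \<le> \<rho>" by (rule field_le_epsilon)
  then show ?thesis unfolding r_def \<rho>_def x_def .
qed

end


theorem theorem1:
  fixes \<delta> x0 :: real and X :: "real set"
  assumes "0 < \<delta>" and "\<delta> < 1"
    and "X \<in> sets borel" and "X \<subseteq> {0..}" and "0 \<in> X" and "bdd_above X"
    and "0 < x0" and "x0 \<le> Sup X"
  defines "qbar \<equiv> stationary_rule (q_star \<delta> (x0 / Sup X))"
  shows "perf_ratio \<delta> X x0 (binary_envs X) qbar = rho (x0 / Sup X)
         \<and> rho (x0 / Sup X) > 1/2
         \<and> (x0 / Sup X \<le> \<delta>^2 / (2 - \<delta>) \<longrightarrow> dyn_robust \<delta> X x0 (binary_envs X) qbar)"
proof -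
  note d = assms(1,2) and Xp = assms(4) and X0 = assms(5) and bdd = assms(6) and x0 = assms(7,8)
  have A: "perf_ratio \<delta> X x0 (binary_envs X) qbar = rho (x0 / Sup X)"
    unfolding qbar_def by (rule part_a[OF d Xp X0 bdd x0])
  have xr: "0 < x0 / Sup X" "x0 / Sup X \<le> 1" using xx[OF d Xp X0 bdd x0] by auto
  have B: "rho (x0 / Sup X) > 1/2" using rho_gt[OF xr d] .
  have C: "dyn_robust \<delta> X x0 (binary_envs X) qbar" if hx: "x0 / Sup X \<le> \<delta>^2 / (2 - \<delta>)"
  proof -
    have qin: "qbar \<in> decision_rules" unfolding qbar_def
      using q_bounds[OF xr d] by (intro stat_rule_in) auto
    have ub: "\<And>p. p \<in> decision_rules \<Longrightarrow> perf_ratio \<delta> X x0 (binary_envs X) p \<le> rho (x0 / Sup X)"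
      by (rule part_b_bound[OF d Xp X0 bdd x0 hx])
    have ne: "decision_rules \<noteq> {}" using one_rule by auto
    have bddS: "bdd_above ((\<lambda>p. perf_ratio \<delta> X x0 (binary_envs X) p) ` decision_rules)"
      using ub by (auto intro!: bdd_aboveI)
    have "opt_ratio \<delta> X x0 (binary_envs X) = rho (x0 / Sup X)"
      unfolding opt_ratio_def
    proof (rule antisym)
      show "(SUP p\<in>decision_rules. perf_ratio \<delta> X x0 (binary_envs X) p) \<le> rho (x0 / Sup X)"
        by (rule cSUP_least[OF ne ub])
      show "rho (x0 / Sup X) \<le> (SUP p\<in>decision_rules. perf_ratio \<delta> X x0 (binary_envs X) p)"
        using cSUP_upper[OF qin bddS] A by simp
    qed
    then show ?thesis unfolding dyn_robust_def using qin A by simp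
  qed
  show ?thesis using A B C by blast
qed

end
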